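(* Let $f:\mathbb{R}^d\to\mathbb{R}$ and $P:\mathbb{R}^d\to\mathbb{R}^s$ be continuously differentiable, $D\subseteq\mathbb{R}^s$ closed, $\Omega=\{z\mid P(z)\in D\}$, and let $\bar z\in\Omega$ be B-stationary for the problem $\min f(z)$ s.t. $P(z)\in D$. Assume that GGCQ holds at $\bar z$ and that the mapping $u\rightrightarrows\nabla P(\bar z)u-T_D(P(\bar z))$ is metrically subregular at $(0,0)$. Then there exist a natural number $k\ge0$, directions $u_1,\dots,u_k\in\mathbb{R}^d$, a direction $w\in T^k_D(P(\bar z);\nabla P(\bar z)u_1,\dots,\nabla P(\bar z)u_k)$ and a multiplier $w^\ast\in\widehat N_{T^k_D(P(\bar z);\nabla P(\bar z)u_1,\dots,\nabla P(\bar z)u_k)}(w)$ such that \[\nabla f(\bar z)+\nabla P(\bar z)^\ast w^\ast=0.\] Moreover, for every $l=1,\dots,k$ we have $u_l\in T^{{\rm lin},l-1}_{P,D}(\bar z;u_1,\dots,u_{l-1})$, $\nabla P(\bar z)u_l\notin\operatorname{Lsp}(T^{l-1}_D(P(\bar z);\nabla P(\bar z)u_1,\dots,\nabla P(\bar z)u_{l-1}))$, $\langle\nabla f(\bar z),u_l\rangle=0$, and $T^{l-1}_D(P(\bar z);\nabla P(\bar z)u_1,\dots,\nabla P(\bar z)u_{l-1})$ is not locally polyhedral near $\nabla P(\bar z)u_l$.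
   Context: Tangent cone: $T_\Omega(\bar z)=\{w\mid \exists t_k\downarrow0,\ w_k\to w,\ \bar z+t_kw_k\in\Omega\}$, with $T_\Omega(\bar z)=\emptyset$ if $\bar z\notin\Omega$. Polar cone $K^\ast=\{z^\ast\mid\langle z^\ast,w\rangle\le0\ \forall w\in K\}$; regular normal cone $\widehat N_\Omega(\bar z)=(T_\Omega(\bar z))^\ast$ (empty if $\bar z\notin\Omega$). Higher-order tangent cones: for $\bar y\in D$ and directions $v_1,v_2,\dots$, $T^0_D(\bar y)=T_D(\bar y)$ and $T^k_D(\bar y;v_1,\dots,v_k)=T_{T^{k-1}_D(\bar y;v_1,\dots,v_{k-1})}(v_k)$ for $k\ge1$. Higher-order linearized tangent cones: $T^{{\rm lin},0}_{P,D}(\bar z)=\{u\mid\nabla P(\bar z)u\in T_D(P(\bar z))\}=:T^{\rm lin}_{P,D}(\bar z)$ and $T^{{\rm lin},k}_{P,D}(\bar z;u_1,\dots,u_k)=\{u\mid\nabla P(\bar z)u\in T^k_D(P(\bar z);\nabla P(\bar z)u_1,\dots,\nabla P(\bar z)u_k)\}$. $\bar z$ is B-stationary if $0\in\nabla f(\bar z)+\widehat N_\Omega(\bar z)$. GGCQ holds at $\bar z$ if $\widehat N_\Omega(\bar z)=(T^{\rm lin}_{P,D}(\bar z))^\ast$. A mapping $M$ is metrically subregular at $(\bar z,\bar w)\in\operatorname{gph}M$ if there are a neighborhood $W$ of $\bar z$ and $\kappa>0$ with $\operatorname{dist}(z,M^{-1}(\bar w))\le\kappa\operatorname{dist}(\bar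 w,M(z))$ for $z\in W$. For a cone $C$, $\operatorname{Lsp}(C)$ is the largest linear subspace $L$ with $C+L\subseteq C$. A set is polyhedral if it is a finite union of finite intersections of closed halfspaces; $\Omega$ is locally polyhedral near $\bar z\in\Omega$ if $\Omega\cap W=C\cap W$ for some neighborhood $W$ of $\bar z$ and polyhedral $C$. *)

theory Defs
  imports "HOL-Analysis.Analysis"
begin

definition tcone :: "'a::euclidean_space set \<Rightarrow> 'a \<Rightarrow> 'a set" where
  "tcone \<Omega> z = (if z \<in> \<Omega> then
     {w. \<exists>t :: nat \<Rightarrow> real. \<exists>ws :: nat \<Rightarrow> 'a.
          (\<forall>k. t k > 0) \<and> t \<longlonglongrightarrow> 0 \<and> ws \<longlonglongrightarrow> w \<and> (\<forall>k. z + t k *\<^sub>R ws k \<in> \<Omega>)}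
     else {})"

definition polar :: "'a::euclidean_space set \<Rightarrow> 'a set" where
  "polar K = {zs. \<forall>w\<in>K. zs \<bullet> w \<le> 0}"

definition rnormal :: "'a::euclidean_space set \<Rightarrow> 'a \<Rightarrow> 'a set" where
  "rnormal \<Omega> z = (if z \<in> \<Omega> then polar (tcone \<Omega> z) else {})"

text \<open>Higher-order tangent cone: htcone D y [v1,...,vk] = T^k_D(y; v1,...,vk),
  with T^0_D(y) = T_D(y) and T^k = T_{T^(k-1)}(v_k).\<close>
definition htcone :: "'a::euclidean_space set \<Rightarrow> 'a \<Rightarrow> 'a list \<Rightarrow> 'a set" where
  "htcone D y vs = foldl (\<lambda>C v. tcone C v) (tcone D y) vs"

text \<open>Higher-order linearized tangent cone T^{lin,k}_{P,D}(z; u1,...,uk),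
  where P' is the derivative of P at z (for us = [] this is T^lin_{P,D}(z)).\<close>
definition hlincone :: "('a::euclidean_space \<Rightarrow> 'b::euclidean_space) \<Rightarrow> ('a \<Rightarrow> 'b)
     \<Rightarrow> 'b set \<Rightarrow> 'a \<Rightarrow> 'a list \<Rightarrow> 'a set" where
  "hlincone P P' D z us = {u. P' u \<in> htcone D (P z) (map P' us)}"

definition Lsp :: "'a::euclidean_space set \<Rightarrow> 'a set" where
  "Lsp C = (THE L. subspace L \<and> (\<forall>c\<in>C. \<forall>l\<in>L. c + l \<in> C) \<and>
              (\<forall>L'. subspace L' \<and> (\<forall>c\<in>C. \<forall>l\<in>L'. c + l \<in> C) \<longrightarrow> L' \<subseteq> L))"

definition polyhedral_set :: "'a::euclidean_space set \<Rightarrow> bool" where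
  "polyhedral_set C \<longleftrightarrow> (\<exists>F. finite F \<and> C = \<Union>F \<and>
     (\<forall>S\<in>F. \<exists>H. finite H \<and> S = \<Inter>H \<and>
        (\<forall>h\<in>H. \<exists>a b. a \<noteq> 0 \<and> h = {x. a \<bullet> x \<le> b})))"

definition locally_polyhedral :: "'a::euclidean_space set \<Rightarrow> 'a \<Rightarrow> bool" where
  "locally_polyhedral \<Omega> z \<longleftrightarrow> z \<in> \<Omega> \<and>
     (\<exists>W C. open W \<and> z \<in> W \<and> polyhedral_set C \<and> \<Omega> \<inter> W = C \<inter> W)"

text \<open>Metric subregularity of a set-valued map M at (z, w) \<in> gph M.
  The distance to an empty set is +\<infinity> in the paper, so points z with
  M z = {} satisfy the estimate trivially.\<close>
definition metrically_subregular ::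
  "('a::euclidean_space \<Rightarrow> 'b::euclidean_space set) \<Rightarrow> 'a \<Rightarrow> 'b \<Rightarrow> bool" where
  "metrically_subregular M z w \<longleftrightarrow> w \<in> M z \<and>
     (\<exists>W \<kappa>. open W \<and> z \<in> W \<and> \<kappa> > 0 \<and>
        (\<forall>x\<in>W. M x \<noteq> {} \<longrightarrow> infdist x {y. w \<in> M y} \<le> \<kappa> * infdist w (M x)))"

end

theory Submission
  imports Defs
begin
lemma tcone_iff:
  assumes "z \<in> S"
  shows "w \<in> tcone S z \<longleftrightarrow> (\<forall>e>0. \<exists>t v. 0 < t \<and> t < e \<and> norm (v - w) < e \<and> z + t *\<^sub>R v \<in> S)"
proof
  assume "w \<in> tcone S z"
  then obtain t :: "nat \<Rightarrow> real" and ws where t: "\<forall>k. t k > 0" "t \<longlonglongrightarrow> 0" "ws \<longlonglongrightarrow> w"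
    "\<forall>k. z + t k *\<^sub>R ws k \<in> S" using assms unfolding tcone_def by auto
  show "\<forall>e>0. \<exists>t v. 0 < t \<and> t < e \<and> norm (v - w) < e \<and> z + t *\<^sub>R v \<in> S"
  proof (intro allI impI)
    fix e :: real assume e: "e > 0"
    obtain N1 where N1: "\<forall>n\<ge>N1. dist (t n) 0 < e" using t(2) e unfolding lim_sequentially by blast
    obtain N2 where N2: "\<forall>n\<ge>N2. dist (ws n) w < e" using t(3) e unfolding lim_sequentially by blast
    define n where "n = max N1 N2"
    have "t n < e" using N1[rule_format, of n] n_def by (auto simp: dist_real_def)
    moreover have "norm (ws n - w) < e" using N2[rule_format, of n] n_def by (auto simp: dist_norm)
    ultimately show "\<exists>t v. 0 < t \<and> t < e \<and> norm (v - w) < e \<and> z + t *\<^sub>R v \<in> S"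
      using t(1,4) by blast
  qed
next
  assume H: "\<forall>e>0. \<exists>t v. 0 < t \<and> t < e \<and> norm (v - w) < e \<and> z + t *\<^sub>R v \<in> S"
  have "\<forall>n::nat. \<exists>t v. 0 < t \<and> t < inverse (real n + 1) \<and> norm (v - w) < inverse (real n + 1) \<and> z + t *\<^sub>R v \<in> S"
    using H by (metis inverse_positive_iff_positive of_nat_0_le_iff add_nonneg_pos zero_less_one)
  then obtain T V where TV: "\<And>n::nat. 0 < T n \<and> T n < inverse (real n + 1) \<and> norm (V n - w) < inverse (real n + 1) \<and> z + T n *\<^sub>R V n \<in> S"
    by metis
  have lim0: "(\<lambda>n::nat. inverse (real n + 1)) \<longlonglongrightarrow> 0"
    using LIMSEQ_inverse_real_of_nat_add[of 0] by (simp add: add.commute)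
  have "T \<longlonglongrightarrow> 0"
  proof (rule tendsto_sandwich[of "\<lambda>_. 0" _ _ "\<lambda>n. inverse (real n + 1)"])
    show "\<forall>\<^sub>F n in sequentially. 0 \<le> T n" using TV by (simp add: less_imp_le)
    show "\<forall>\<^sub>F n in sequentially. T n \<le> inverse (real n + 1)" using TV by (simp add: less_imp_le)
  qed (auto simp: lim0)
  moreover have "V \<longlonglongrightarrow> w"
  proof -
    have "(\<lambda>n. norm (V n - w)) \<longlonglongrightarrow> 0"
    proof (rule tendsto_sandwich[of "\<lambda>_. 0" _ _ "\<lambda>n. inverse (real n + 1)"])
      show "\<forall>\<^sub>F n in sequentially. norm (V n - w) \<le> inverse (real n + 1)" using TV by (simp add: less_imp_le)
    qed (auto simp: lim0)
    thus ?thesis using Lim_null tendsto_norm_zero_iff by blast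
  qed
  ultimately show "w \<in> tcone S z" using assms TV unfolding tcone_def by auto
qed

lemma zero_in_tcone: assumes "z \<in> S" shows "0 \<in> tcone S z"
proof -
  have "\<forall>e>0. \<exists>t v. 0 < t \<and> t < e \<and> norm (v - 0) < e \<and> z + t *\<^sub>R v \<in> S"
  proof (intro allI impI)
    fix e :: real assume "e > 0"
    then show "\<exists>t v. 0 < t \<and> t < e \<and> norm (v - 0) < e \<and> z + t *\<^sub>R v \<in> S"
      using assms by (intro exI[of _ "e/2"] exI[of _ 0]) auto
  qed
  thus ?thesis using tcone_iff[OF assms] by blast
qed

lemma tcone_scale:
  assumes "z \<in> S" "w \<in> tcone S z" "c > 0" shows "c *\<^sub>R w \<in> tcone S z"
proof -
  have H: "\<forall>e>0. \<exists>t v. 0 < t \<and> t < e \<and> norm (v - w) < e \<and> z + t *\<^sub>R v \<in> S"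
    using tcone_iff[OF assms(1)] assms(2) by blast
  have "\<forall>e>0. \<exists>t v. 0 < t \<and> t < e \<and> norm (v - c *\<^sub>R w) < e \<and> z + t *\<^sub>R v \<in> S"
  proof (intro allI impI)
    fix e :: real assume e: "e > 0"
    then obtain t v where tv: "0 < t" "t < min (e/c) (c*e)" "norm (v - w) < min (e/c) (c*e)" "z + t *\<^sub>R v \<in> S"
      using H assms(3) by (metis divide_pos_pos min_def mult_pos_pos)
    have "norm (c *\<^sub>R v - c *\<^sub>R w) = c * norm (v - w)"
      using assms(3) by (metis abs_of_pos norm_scaleR scaleR_right_diff_distrib)
    also have "\<dots> < e" using tv(3) assms(3) by (simp add: field_simps)
    finally have 1: "norm (c *\<^sub>R v - c *\<^sub>R w) < e" .
    have 2: "t / c < e" using tv(2) assms(3) by (simp add: field_simps)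
    have 3: "z + (t / c) *\<^sub>R (c *\<^sub>R v) \<in> S" using tv(4) assms(3) by simp
    show "\<exists>t v. 0 < t \<and> t < e \<and> norm (v - c *\<^sub>R w) < e \<and> z + t *\<^sub>R v \<in> S"
      using 1 2 3 tv(1) assms(3) by (intro exI[of _ "t/c"] exI[of _ "c *\<^sub>R v"]) auto
  qed
  thus ?thesis using tcone_iff[OF assms(1)] by blast
qed

lemma tcone_cone: "cone (tcone S z)"
  unfolding cone_def
proof (intro ballI allI impI)
  fix x and c :: real assume x: "x \<in> tcone S z" and c: "c \<ge> 0"
  have z: "z \<in> S" using x unfolding tcone_def by (auto split: if_splits)
  show "c *\<^sub>R x \<in> tcone S z"
  proof (cases "c = 0")
    case True thus ?thesis using zero_in_tcone[OF z] by simp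
  next
    case False thus ?thesis using tcone_scale[OF z x] c by simp
  qed
qed

lemma tcone_closed: "closed (tcone S z)"
proof (cases "z \<in> S")
  case False thus ?thesis unfolding tcone_def by simp
next
  case z: True
  have "closure (tcone S z) \<subseteq> tcone S z"
  proof
    fix x assume "x \<in> closure (tcone S z)"
    hence ap: "\<forall>e>0. \<exists>y\<in>tcone S z. dist y x < e" using closure_approachable by blast
    have "\<forall>e>0. \<exists>t v. 0 < t \<and> t < e \<and> norm (v - x) < e \<and> z + t *\<^sub>R v \<in> S"
    proof (intro allI impI)
      fix e :: real assume e: "e > 0"
      obtain y where y: "y \<in> tcone S z" "dist y x < e/2" using ap e by (meson half_gt_zero)
      obtain t v where tv: "0 < t" "t < e/2" "norm (v - y) < e/2" "z + t *\<^sub>R v \<in> S"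
        using y(1) tcone_iff[OF z] e by (meson half_gt_zero)
      have "norm (v - x) \<le> norm (v - y) + norm (y - x)" using norm_triangle_ineq[of "v - y" "y - x"] by simp
      also have "\<dots> < e" using tv(3) y(2) by (simp add: dist_norm)
      finally show "\<exists>t v. 0 < t \<and> t < e \<and> norm (v - x) < e \<and> z + t *\<^sub>R v \<in> S"
        using tv by auto
    qed
    thus "x \<in> tcone S z" using tcone_iff[OF z] by blast
  qed
  thus ?thesis using closure_subset_eq by blast
qed

lemma foldl_tcone_cone: "cone K \<Longrightarrow> cone (foldl (\<lambda>C v. tcone C v) K vs)"
  by (induction vs arbitrary: K) (auto simp: tcone_cone)

lemma foldl_tcone_closed: "closed K \<Longrightarrow> closed (foldl (\<lambda>C v. tcone C v) K vs)"
  by (induction vs arbitrary: K) (auto simp: tcone_closed)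

definition lsp :: "'a::euclidean_space set \<Rightarrow> 'a set" where
  "lsp K = {l. \<forall>c\<in>K. c + l \<in> K \<and> c - l \<in> K}"

lemma lsp_subspace: assumes "cone K" shows "subspace (lsp K)"
  unfolding subspace_def
proof (intro conjI ballI allI)
  show "0 \<in> lsp K" unfolding lsp_def by simp
next
  fix x y assume "x \<in> lsp K" "y \<in> lsp K"
  thus "x + y \<in> lsp K" unfolding lsp_def
  proof (intro CollectI ballI conjI)
    fix k assume xy: "x \<in> {l. \<forall>c\<in>K. c + l \<in> K \<and> c - l \<in> K}" "y \<in> {l. \<forall>c\<in>K. c + l \<in> K \<and> c - l \<in> K}" and k: "k \<in> K"
    have "k + x \<in> K" "k - x \<in> K" using xy k by auto
    hence "(k + x) + y \<in> K" "(k - x) - y \<in> K" using xy by auto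
    thus "k + (x + y) \<in> K" "k - (x + y) \<in> K" by (simp_all add: algebra_simps)
  qed
next
  fix c :: real and x assume x: "x \<in> lsp K"
  show "c *\<^sub>R x \<in> lsp K" unfolding lsp_def
  proof (intro CollectI ballI conjI)
    fix k assume k: "k \<in> K"
    have gen: "k + r *\<^sub>R x \<in> K" if "r > 0" "k \<in> K" for k r
    proof -
      have "(1/r) *\<^sub>R k \<in> K" using assms that unfolding cone_def by simp
      hence "(1/r) *\<^sub>R k + x \<in> K" using x unfolding lsp_def by blast
      hence "r *\<^sub>R ((1/r) *\<^sub>R k + x) \<in> K" using assms that unfolding cone_def by simp
      thus ?thesis using that by (simp add: scaleR_add_right)
    qed
    have gen2: "k - r *\<^sub>R x \<in> K" if "r > 0" "k \<in> K" for k r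
    proof -
      have "(1/r) *\<^sub>R k \<in> K" using assms that unfolding cone_def by simp
      hence "(1/r) *\<^sub>R k - x \<in> K" using x unfolding lsp_def by blast
      hence "r *\<^sub>R ((1/r) *\<^sub>R k - x) \<in> K" using assms that unfolding cone_def by simp
      thus ?thesis using that by (simp add: scaleR_diff_right)
    qed
    have trich: "c > 0 \<or> c = 0 \<or> c < 0" by linarith
    thus "k + c *\<^sub>R x \<in> K"
      using gen[OF _ k, of c] gen2[OF _ k, of "-c"] k by auto
    from trich show "k - c *\<^sub>R x \<in> K"
      using gen[OF _ k, of "-c"] gen2[OF _ k, of c] k by auto
  qed
qed

lemma lsp_iff: "l \<in> lsp K \<longleftrightarrow> (\<forall>c\<in>K. c + l \<in> K \<and> c - l \<in> K)"
  unfolding lsp_def by simp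

lemma Lsp_eq: assumes "cone K" shows "Lsp K = lsp K"
proof -
  define Q where "Q = (\<lambda>L. subspace L \<and> (\<forall>c\<in>K. \<forall>l\<in>L. c + l \<in> K))"
  have "\<forall>c\<in>K. \<forall>l\<in>lsp K. c + l \<in> K" by (simp add: lsp_iff)
  hence Qlsp: "Q (lsp K)" unfolding Q_def using lsp_subspace[OF assms] by simp
  have max: "L' \<subseteq> lsp K" if "Q L'" for L'
  proof
    fix l assume l: "l \<in> L'"
    have s: "subspace L'" and a: "\<forall>c\<in>K. \<forall>l\<in>L'. c + l \<in> K" using that unfolding Q_def by auto
    have "-l \<in> L'" using s l subspace_neg by blast
    hence "\<forall>c\<in>K. c + l \<in> K \<and> c - l \<in> K" using a l by (metis diff_conv_add_uminus)
    thus "l \<in> lsp K" by (simp add: lsp_iff)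
  qed
  have "(THE L. Q L \<and> (\<forall>L'. Q L' \<longrightarrow> L' \<subseteq> L)) = lsp K"
  proof (rule the_equality)
    show "Q (lsp K) \<and> (\<forall>L'. Q L' \<longrightarrow> L' \<subseteq> lsp K)" using Qlsp max by blast
  next
    fix L assume L: "Q L \<and> (\<forall>L'. Q L' \<longrightarrow> L' \<subseteq> L)"
    have "lsp K \<subseteq> L" using L Qlsp by blast
    moreover have "L \<subseteq> lsp K" using L max by blast
    ultimately show "L = lsp K" by (rule subset_antisym[rotated])
  qed
  moreover have "Lsp K = (THE L. Q L \<and> (\<forall>L'. Q L' \<longrightarrow> L' \<subseteq> L))" unfolding Lsp_def Q_def by (simp only: conj_assoc)
  ultimately show ?thesis by simp
qed

lemma lsp_tcone_add:
  assumes K: "cone K" and y: "y \<in> K" and l: "l \<in> lsp K" and c: "c \<in> tcone K y"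
  shows "c + l \<in> tcone K y"
proof -
  have "\<forall>e>0. \<exists>t v. 0 < t \<and> t < e \<and> norm (v - (c + l)) < e \<and> y + t *\<^sub>R v \<in> K"
  proof (intro allI impI)
    fix e :: real assume e: "e > 0"
    obtain t v where tv: "0 < t" "t < e" "norm (v - c) < e" "y + t *\<^sub>R v \<in> K"
      using c tcone_iff[OF y] e by blast
    have "t *\<^sub>R l \<in> lsp K" using lsp_subspace[OF K] l subspace_scale by blast
    hence "(y + t *\<^sub>R v) + t *\<^sub>R l \<in> K" using tv(4) unfolding lsp_def by blast
    hence "y + t *\<^sub>R (v + l) \<in> K" by (simp add: scaleR_add_right add.assoc)
    moreover have "norm ((v + l) - (c + l)) < e" using tv(3) by simp
    ultimately show "\<exists>t v. 0 < t \<and> t < e \<and> norm (v - (c + l)) < e \<and> y + t *\<^sub>R v \<in> K"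
      using tv(1,2) by blast
  qed
  thus ?thesis using tcone_iff[OF y] by blast
qed

lemma lsp_tcone_mono:
  assumes K: "cone K" and y: "y \<in> K"
  shows "lsp K \<subseteq> lsp (tcone K y)"
proof
  fix l assume l: "l \<in> lsp K"
  have ml: "-l \<in> lsp K" using lsp_subspace[OF K] l subspace_neg by blast
  show "l \<in> lsp (tcone K y)" unfolding lsp_iff
    using lsp_tcone_add[OF K y l] lsp_tcone_add[OF K y ml] by (metis diff_conv_add_uminus)
qed

lemma tcone_add_base:
  assumes K: "cone K" and y: "y \<in> K" and c: "c \<in> tcone K y" and s: "\<bar>s\<bar> = 1"
  shows "c + s *\<^sub>R y \<in> tcone K y"
proof -
  have "\<forall>e>0. \<exists>t v. 0 < t \<and> t < e \<and> norm (v - (c + s *\<^sub>R y)) < e \<and> y + t *\<^sub>R v \<in> K"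
  proof (intro allI impI)
    fix e :: real assume e: "e > 0"
    have me: "min (e/2) (1/2) > 0" using e by simp
    obtain t v where tv: "0 < t" "t < min (e/2) (1/2)" "norm (v - c) < min (e/2) (1/2)" "y + t *\<^sub>R v \<in> K"
      using c tcone_iff[OF y] me by blast
    define r where "r = 1 - s * t"
    have st: "\<bar>s * t\<bar> = t" using s tv(1) by (simp add: abs_mult)
    hence r: "r \<ge> 1/2" using tv(2) unfolding r_def by linarith
    define \<tau> where "\<tau> = t / r"
    have \<tau>pos: "\<tau> > 0" using tv(1) r unfolding \<tau>_def by simp
    have "\<tau> \<le> 2 * t" using r tv(1) unfolding \<tau>_def by (simp add: field_simps)
    hence \<tau>e: "\<tau> < e" using tv(2) by linarith
    have "(1/r) *\<^sub>R (y + t *\<^sub>R v) \<in> K" using K tv(4) r unfolding cone_def by simp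
    moreover have "(1/r) *\<^sub>R (y + t *\<^sub>R v) = y + \<tau> *\<^sub>R (v + s *\<^sub>R y)"
    proof -
      have e2: "1 + \<tau> * s = 1 / r" using r unfolding \<tau>_def r_def by (simp add: field_simps)
      have e4: "\<tau> = (1/r) * t" unfolding \<tau>_def by simp
      have "y + \<tau> *\<^sub>R (v + s *\<^sub>R y) = (1 + \<tau> * s) *\<^sub>R y + \<tau> *\<^sub>R v"
        by (simp add: algebra_simps)
      also have "\<dots> = (1/r) *\<^sub>R y + ((1/r) * t) *\<^sub>R v" unfolding e2 by (simp only: e4)
      also have "\<dots> = (1/r) *\<^sub>R (y + t *\<^sub>R v)" by (simp add: scaleR_add_right)
      finally show ?thesis by (rule sym)
    qed
    ultimately have "y + \<tau> *\<^sub>R (v + s *\<^sub>R y) \<in> K" by simp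
    moreover have "norm ((v + s *\<^sub>R y) - (c + s *\<^sub>R y)) < e"
    proof -
      have "norm (v - c) < e/2" using tv(3) by simp
      thus ?thesis using e by simp
    qed
    ultimately show "\<exists>t v. 0 < t \<and> t < e \<and> norm (v - (c + s *\<^sub>R y)) < e \<and> y + t *\<^sub>R v \<in> K"
      using \<tau>pos \<tau>e by blast
  qed
  thus ?thesis using tcone_iff[OF y] by blast
qed

lemma base_in_lsp_tcone:
  assumes K: "cone K" and y: "y \<in> K"
  shows "y \<in> lsp (tcone K y)"
  unfolding lsp_iff
proof (intro ballI conjI)
  fix c assume c: "c \<in> tcone K y"
  show "c + y \<in> tcone K y" using tcone_add_base[OF K y c, of 1] by simp
  show "c - y \<in> tcone K y" using tcone_add_base[OF K y c, of "-1"] by simp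
qed

definition good :: "('a::euclidean_space \<Rightarrow> 'b::euclidean_space) \<Rightarrow> 'a \<Rightarrow> real \<Rightarrow> 'b set \<Rightarrow> bool" where
  "good A g c K \<longleftrightarrow> (\<forall>u. \<forall>y\<in>K. g \<bullet> u + c * norm (A u - y) \<ge> 0)"

lemma good_tcone:
  assumes A: "linear A" and G: "good A g c K" and c: "c \<ge> 0" and u1: "A u1 \<in> K" "g \<bullet> u1 = 0"
  shows "good A g c (tcone K (A u1))"
  unfolding good_def
proof (intro allI ballI)
  fix v y' assume y': "y' \<in> tcone K (A u1)"
  show "g \<bullet> v + c * norm (A v - y') \<ge> 0"
  proof (rule ccontr)
    assume neg: "\<not> ?thesis"
    define \<eta> where "\<eta> = - (g \<bullet> v + c * norm (A v - y'))"
    have \<eta>: "\<eta> > 0" using neg unfolding \<eta>_def by simp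
    define e where "e = \<eta> / (2 * (c + 1))"
    have e: "e > 0" using \<eta> c unfolding e_def by simp
    have ce: "c * e < \<eta>"
    proof -
      have "c * e = (c / (c+1)) * (\<eta>/2)" unfolding e_def by (simp add: field_simps)
      also have "\<dots> \<le> 1 * (\<eta>/2)" using c \<eta> by (intro mult_right_mono) simp_all
      also have "\<dots> < \<eta>" using \<eta> by simp
      finally show ?thesis .
    qed
    obtain t z where tz: "0 < t" "norm (z - y') < e" "A u1 + t *\<^sub>R z \<in> K"
      using y' tcone_iff[OF u1(1)] e by blast
    have "g \<bullet> (u1 + t *\<^sub>R v) + c * norm (A (u1 + t *\<^sub>R v) - (A u1 + t *\<^sub>R z)) \<ge> 0"
      using G tz(3) unfolding good_def by blast
    moreover have "norm (A (u1 + t *\<^sub>R v) - (A u1 + t *\<^sub>R z)) = t * norm (A v - z)"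
    proof -
      have "A (u1 + t *\<^sub>R v) - (A u1 + t *\<^sub>R z) = t *\<^sub>R (A v - z)"
        using A by (simp add: linear_add linear_scale scaleR_diff_right)
      thus ?thesis using tz(1) by simp
    qed
    ultimately have "t * (g \<bullet> v + c * norm (A v - z)) \<ge> 0"
      using u1(2) tz(1) by (simp add: inner_add_right algebra_simps)
    hence 1: "g \<bullet> v + c * norm (A v - z) \<ge> 0" using tz(1) by (simp add: zero_le_mult_iff)
    have tri: "norm (A v - z) \<le> norm (A v - y') + norm (y' - z)" using norm_triangle_ineq[of "A v - y'" "y' - z"] by simp
    have "norm (y' - z) \<le> e" using tz(2) by (simp add: norm_minus_commute)
    hence "norm (A v - z) \<le> norm (A v - y') + e" using tri by linarith
    hence "c * norm (A v - z) \<le> c * (norm (A v - y') + e)"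
      using c by (rule mult_left_mono)
    hence "c * norm (A v - z) \<le> c * norm (A v - y') + c * e" by (simp add: distrib_left)
    thus False using 1 ce unfolding \<eta>_def by linarith
  qed
qed

lemma aux_ineq:
  fixes X p q s N :: real
  assumes X: "X > 0" and p: "\<bar>p\<bar> \<le> X * s" and s: "s \<ge> 0" and q: "q = s\<^sup>2"
    and N: "N \<ge> 0" "N\<^sup>2 = X\<^sup>2 + 2*p + q"
  shows "N \<le> (X\<^sup>2 + p + q) / X"
proof -
  define Y where "Y = X\<^sup>2 + p + q"
  have "0 \<le> (X - s)\<^sup>2" by simp
  hence "2 * X * s \<le> X\<^sup>2 + s\<^sup>2" by (simp add: power2_eq_square algebra_simps)
  moreover have "X * s \<ge> 0" using X s by simp
  ultimately have Y: "Y \<ge> 0" using p q unfolding Y_def by linarith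
  have qq: "q \<ge> 0" using q by simp
  have id: "Y\<^sup>2 = X\<^sup>2 * (X\<^sup>2 + 2*p + q) + ((p+q)\<^sup>2 + X\<^sup>2 * q)"
    unfolding Y_def by (simp add: power2_eq_square algebra_simps)
  have "(X * N)\<^sup>2 = X\<^sup>2 * (X\<^sup>2 + 2*p + q)" using N(2) by (simp add: power_mult_distrib)
  also have "\<dots> \<le> Y\<^sup>2" unfolding id using qq by simp
  finally have "X * N \<le> Y" using Y by (meson power2_le_imp_le)
  thus ?thesis using X unfolding Y_def by (simp add: field_simps)
qed

lemma norm_add_quad:
  fixes a b :: "'b::euclidean_space"
  assumes a: "a \<noteq> 0" and t: "t \<ge> 0"
  shows "norm (a + t *\<^sub>R b) \<le> norm a + t * (a \<bullet> b) / norm a + t\<^sup>2 * (b \<bullet> b) / norm a"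
proof -
  have X: "norm a > 0" using a by simp
  have "norm (a + t *\<^sub>R b) \<le> ((norm a)\<^sup>2 + t * (a \<bullet> b) + (t * norm b)\<^sup>2) / norm a"
  proof (rule aux_ineq[OF X])
    show "\<bar>t * (a \<bullet> b)\<bar> \<le> norm a * (t * norm b)"
      using t Cauchy_Schwarz_ineq2[of a b] by (simp add: abs_mult mult_left_mono mult.left_commute)
    have "(norm (a + t *\<^sub>R b))\<^sup>2 = (a + t *\<^sub>R b) \<bullet> (a + t *\<^sub>R b)" by (rule power2_norm_eq_inner)
    also have "\<dots> = a \<bullet> a + 2 * (t * (a \<bullet> b)) + t\<^sup>2 * (b \<bullet> b)"
      by (simp add: inner_add_left inner_add_right inner_commute power2_eq_square algebra_simps)
    also have "\<dots> = (norm a)\<^sup>2 + 2 * (t * (a \<bullet> b)) + (t * norm b)\<^sup>2"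
      by (simp add: power2_norm_eq_inner power_mult_distrib)
    finally show "(norm (a + t *\<^sub>R b))\<^sup>2 = (norm a)\<^sup>2 + 2 * (t * (a \<bullet> b)) + (t * norm b)\<^sup>2" .
  qed (use t in auto)
  also have "\<dots> = norm a + t * (a \<bullet> b) / norm a + t\<^sup>2 * (b \<bullet> b) / norm a"
    using X by (simp add: field_simps power2_eq_square power2_norm_eq_inner[symmetric] power_mult_distrib)
  finally show ?thesis .
qed

lemma mult_from_min:
  fixes A :: "'a::euclidean_space \<Rightarrow> 'b::euclidean_space"
  assumes A: "linear A" and G: "good A g c K" and c: "c \<ge> 0"
    and y: "y \<in> K" and ne: "A u \<noteq> y" and F0: "g \<bullet> u + c * norm (A u - y) = 0"
  shows "\<exists>ws. ws \<in> rnormal K y \<and> g + adjoint A ws = 0"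
proof -
  define a where "a = A u - y"
  have a0: "a \<noteq> 0" using ne unfolding a_def by simp
  define X where "X = norm a"
  have X: "X > 0" using a0 unfolding X_def by simp
  have gu: "g \<bullet> u = - c * X" using F0 unfolding X_def a_def by simp
  have dir: "g \<bullet> v + c * (a \<bullet> A v) / X \<ge> 0" for v
  proof (rule ccontr)
    assume neg: "\<not> ?thesis"
    define \<eta> where "\<eta> = - (g \<bullet> v + c * (a \<bullet> A v) / X)"
    have \<eta>: "\<eta> > 0" using neg unfolding \<eta>_def by simp
    define b where "b = A v"
    define B where "B = c * (b \<bullet> b) / X"
    have B: "B \<ge> 0" using c X unfolding B_def by simp
    define t where "t = \<eta> / (2 * (B + 1))"
    have t: "t > 0" using \<eta> B unfolding t_def by simp
    have tB: "t * B < \<eta>"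
    proof -
      have "t * B = (B / (B + 1)) * (\<eta> / 2)" unfolding t_def by (simp add: field_simps)
      also have "\<dots> \<le> 1 * (\<eta> / 2)" using B \<eta> by (intro mult_right_mono) simp_all
      also have "\<dots> < \<eta>" using \<eta> by simp
      finally show ?thesis .
    qed
    have "A (u + t *\<^sub>R v) - y = a + t *\<^sub>R b"
      unfolding a_def b_def using A by (simp add: linear_add linear_scale algebra_simps)
    hence "g \<bullet> (u + t *\<^sub>R v) + c * norm (a + t *\<^sub>R b) \<ge> 0"
      using G y unfolding good_def by metis
    moreover have "norm (a + t *\<^sub>R b) \<le> X + t * (a \<bullet> b) / X + t\<^sup>2 * (b \<bullet> b) / X"
      unfolding X_def using norm_add_quad[OF a0, of t b] t by simp
    ultimately have "0 \<le> g \<bullet> u + t * (g \<bullet> v) + c * (X + t * (a \<bullet> b) / X + t\<^sup>2 * (b \<bullet> b) / X)"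
      using c by (smt (verit) inner_add_right inner_scaleR_right mult_left_mono)
    also have "\<dots> = t * (- \<eta> + t * B)"
      unfolding gu \<eta>_def B_def b_def using X by (simp add: field_simps power2_eq_square)
    finally have "0 \<le> t * (- \<eta> + t * B)" .
    moreover have "t * (- \<eta> + t * B) < 0" using t tB by (simp add: mult_pos_neg)
    ultimately show False by linarith
  qed
  have eq: "g \<bullet> v + c * (a \<bullet> A v) / X = 0" for v
  proof -
    have "A (- v) = - A v" using A by (simp add: linear_neg)
    hence "g \<bullet> (-v) + c * (a \<bullet> A (-v)) / X = - (g \<bullet> v + c * (a \<bullet> A v) / X)" by simp
    thus ?thesis using dir[of v] dir[of "-v"] by linarith
  qed
  define ws where "ws = (c / X) *\<^sub>R a"
  have adj: "g + adjoint A ws = 0"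
  proof -
    have "(g + adjoint A ws) \<bullet> x = 0" for x
    proof -
      have "adjoint A ws \<bullet> x = A x \<bullet> ws" using adjoint_works[OF A, of x ws] by (simp add: inner_commute)
      also have "\<dots> = c * (a \<bullet> A x) / X" unfolding ws_def by (simp add: inner_commute)
      finally show ?thesis using eq[of x] by (simp add: inner_add_left)
    qed
    from this[of "g + adjoint A ws"] show ?thesis by simp
  qed
  have pol: "ws \<bullet> d \<le> 0" if d: "d \<in> tcone K y" for d
  proof (cases "c = 0")
    case True thus ?thesis unfolding ws_def by simp
  next
    case False
    hence cpos: "c > 0" using c by simp
    have ad: "a \<bullet> d \<le> 0"
    proof (rule ccontr)
      assume "\<not> a \<bullet> d \<le> 0"
      hence \<eta>: "a \<bullet> d > 0" by simp
      define C where "C = 2 * X + (norm d + 1)\<^sup>2 + 1"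
      have C: "C > 0" unfolding C_def using X by (simp add: add_pos_nonneg)
      define e where "e = min 1 ((a \<bullet> d) / C)"
      have e: "e > 0" "e \<le> 1" "e * C \<le> a \<bullet> d" using \<eta> C unfolding e_def
        by (auto simp: min_def field_simps)
      obtain t z where tz: "0 < t" "t < e" "norm (z - d) < e" "y + t *\<^sub>R z \<in> K"
        using d tcone_iff[OF y] e(1) by blast
      have "g \<bullet> u + c * norm (A u - (y + t *\<^sub>R z)) \<ge> 0" using G tz(4) unfolding good_def by blast
      hence "c * norm (a - t *\<^sub>R z) \<ge> c * X" using gu unfolding a_def by (simp add: algebra_simps)
      hence nX: "norm (a - t *\<^sub>R z) \<ge> X" using cpos by simp
      have "X\<^sup>2 \<le> (norm (a - t *\<^sub>R z))\<^sup>2" using nX X by (simp add: power_mono)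
      also have "\<dots> = (a - t *\<^sub>R z) \<bullet> (a - t *\<^sub>R z)" by (rule power2_norm_eq_inner)
      also have "\<dots> = a \<bullet> a - 2 * t * (a \<bullet> z) + t\<^sup>2 * (z \<bullet> z)"
        by (simp add: inner_diff_left inner_diff_right inner_commute algebra_simps power2_eq_square)
      also have "\<dots> = X\<^sup>2 - 2 * t * (a \<bullet> z) + t\<^sup>2 * (z \<bullet> z)"
        unfolding X_def by (simp add: power2_norm_eq_inner)
      finally have az: "2 * (a \<bullet> z) \<le> t * (z \<bullet> z)" using tz(1)
        by (simp add: power2_eq_square algebra_simps)
      have nz: "norm z \<le> norm d + 1" using tz(3) e(2) norm_triangle_ineq[of "z - d" d] by simp
      have "z \<bullet> z \<le> (norm d + 1)\<^sup>2" using nz by (simp add: power2_norm_eq_inner[symmetric] power_mono)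
      hence "t * (z \<bullet> z) \<le> e * (norm d + 1)\<^sup>2" using tz(1,2)
        by (meson less_imp_le mult_mono' zero_le_power2 inner_ge_zero order_trans)
      moreover have "a \<bullet> d - a \<bullet> z \<le> X * e"
      proof -
        have "a \<bullet> d - a \<bullet> z = a \<bullet> (d - z)" by (simp add: inner_diff_right)
        also have "\<dots> \<le> X * norm (d - z)" unfolding X_def by (rule norm_cauchy_schwarz)
        also have "\<dots> \<le> X * e" using tz(3) X by (simp add: norm_minus_commute less_imp_le)
        finally show ?thesis .
      qed
      ultimately have "2 * (a \<bullet> d) \<le> e * (2 * X + (norm d + 1)\<^sup>2)" using az by (simp add: algebra_simps)
      also have "\<dots> < e * C" unfolding C_def using e(1) by simp
      also have "\<dots> \<le> a \<bullet> d" using e(3) .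
      finally show False using \<eta> by simp
    qed
    thus ?thesis unfolding ws_def using cpos X by (simp add: mult_nonneg_nonpos divide_nonpos_pos)
  qed
  have "ws \<in> rnormal K y" unfolding rnormal_def polar_def using y pol by simp
  thus ?thesis using adj by blast
qed

lemma M_subspace:
  assumes A: "linear A" and K: "cone K"
  shows "subspace {u. A u \<in> lsp K \<and> g \<bullet> u = 0}"
  using lsp_subspace[OF K] A unfolding subspace_def
  by (auto simp: linear_add linear_scale linear_0 inner_add_right)

lemma N_props:
  fixes A :: "'a::euclidean_space \<Rightarrow> 'b::euclidean_space" and g :: 'a
  assumes A: "linear A" and K: "cone K"
  defines "N \<equiv> (\<lambda>u. (u, A u)) ` {u. A u \<in> lsp K \<and> g \<bullet> u = 0}"
  shows "subspace N" "closed N" "N \<noteq> {}"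
proof -
  have blA: "bounded_linear A" using A linear_conv_bounded_linear by blast
  have "bounded_linear (\<lambda>u. (u, A u))" by (rule bounded_linear_Pair[OF bounded_linear_ident blA])
  hence lin: "linear (\<lambda>u. (u, A u))" by (rule bounded_linear.linear)
  show sN: "subspace N" unfolding N_def by (rule linear_subspace_image[OF lin M_subspace[OF A K]])
  show "closed N" by (rule closed_subspace[OF sN])
  show "N \<noteq> {}" using sN subspace_0 by blast
qed

lemma normalize:
  fixes A :: "'a::euclidean_space \<Rightarrow> 'b::euclidean_space"
  assumes A: "linear A" and K: "cone K"
    and N_def: "N = (\<lambda>u. (u, A u)) ` {u. A u \<in> lsp K \<and> g \<bullet> u = 0}"
    and y: "y \<in> K" and neg: "g \<bullet> u + c * norm (A u - y) < 0"
  shows "\<exists>p. snd p \<in> K \<and> g \<bullet> fst p + c * norm (A (fst p) - snd p) < 0 \<and> norm p = 1 \<and>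
           (\<forall>z\<in>N. 1 \<le> dist p z)"
proof -
  have sN: "subspace N" and cN: "closed N" and neN: "N \<noteq> {}"
    using N_props[OF A K, of g] N_def by auto
  define p where "p = (u, y)"
  have pN: "p \<notin> N"
  proof
    assume "p \<in> N"
    then obtain m where "p = (m, A m)" "g \<bullet> m = 0" unfolding N_def by auto
    thus False using neg unfolding p_def by simp
  qed
  define d where "d = infdist p N"
  have d: "d > 0" unfolding d_def by (rule infdist_pos_not_in_closed[OF cN neN pN])
  obtain q where q: "q \<in> N" "infdist p N = dist p q" using infdist_attains_inf[OF cN neN] by blast
  obtain m where m: "q = (m, A m)" "A m \<in> lsp K" "g \<bullet> m = 0" using q(1) unfolding N_def by auto
  define r where "r = (1/d) *\<^sub>R (p - q)"
  have r: "r = ((1/d) *\<^sub>R (u - m), (1/d) *\<^sub>R (y - A m))" unfolding r_def p_def m by simp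
  have "y - A m \<in> K" using m(2) y unfolding lsp_iff by blast
  hence 1: "snd r \<in> K" using K d unfolding r cone_def by simp
  have "norm r = (1/d) * dist p q" unfolding r_def using d by (simp add: dist_norm)
  hence 2: "norm r = 1" using q(2) d unfolding d_def by simp
  have 3: "1 \<le> dist r z" if z: "z \<in> N" for z
  proof -
    have "q + d *\<^sub>R z \<in> N" using sN q(1) z by (simp add: subspace_add subspace_scale)
    hence "d \<le> dist p (q + d *\<^sub>R z)" unfolding d_def by (rule infdist_le)
    also have "dist p (q + d *\<^sub>R z) = d * dist r z"
    proof -
      have "p - (q + d *\<^sub>R z) = d *\<^sub>R (r - z)" unfolding r_def using d by (simp add: algebra_simps)
      thus ?thesis using d by (simp add: dist_norm)
    qed
    finally show ?thesis using d by simp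
  qed
  have "A (fst r) - snd r = (1/d) *\<^sub>R (A u - y)"
    unfolding r using A by (simp add: linear_scale linear_diff algebra_simps)
  hence n1: "norm (A (fst r) - snd r) = (1/d) * norm (A u - y)" using d by simp
  have n2: "g \<bullet> fst r = (1/d) * (g \<bullet> u)" unfolding r using m(3) by (simp add: inner_diff_right)
  have "g \<bullet> fst r + c * norm (A (fst r) - snd r) = (1/d) * (g \<bullet> u + c * norm (A u - y))"
    unfolding n1 n2 by (simp add: algebra_simps)
  also have "\<dots> < 0" using d neg by (simp add: divide_neg_pos)
  finally show ?thesis using 1 2 3 by blast
qed

lemma good_mono: "good A g c K \<Longrightarrow> c \<le> c' \<Longrightarrow> good A g c' K"
  unfolding good_def by (meson add_left_mono mult_right_mono norm_ge_zero order_trans)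

lemma step:
  fixes A :: "'a::euclidean_space \<Rightarrow> 'b::euclidean_space"
  assumes A: "linear A" and Kc: "closed K" and K: "cone K" and Kne: "K \<noteq> {}"
    and G: "good A g c K" and c: "c \<ge> 0"
  shows "(\<exists>w ws. w \<in> K \<and> ws \<in> rnormal K w \<and> g + adjoint A ws = 0) \<or>
         (\<exists>u. A u \<in> K \<and> g \<bullet> u = 0 \<and> A u \<notin> lsp K)"
proof (cases "g = 0")
  case True
  have "0 \<in> K" using K Kne cone_contains_0 by blast
  moreover have "(0::'b) \<in> rnormal K 0" unfolding rnormal_def polar_def using \<open>0 \<in> K\<close> by simp
  moreover have "g + adjoint A 0 = 0" using True linear_0[OF adjoint_linear[OF A]] by simp
  ultimately show ?thesis by blast
next
  case gne: False
  define Gs where "Gs = {c'. c' \<ge> 0 \<and> good A g c' K}"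
  have cG: "c \<in> Gs" using G c unfolding Gs_def by simp
  have bdd: "bdd_below Gs" unfolding Gs_def bdd_below_def by auto
  define cs where "cs = Inf Gs"
  have cs0: "cs \<ge> 0" unfolding cs_def using cG by (intro cInf_greatest) (auto simp: Gs_def)
  have good_cs: "good A g cs K"
    unfolding good_def
  proof (intro allI ballI)
    fix u y assume y: "y \<in> K"
    show "g \<bullet> u + cs * norm (A u - y) \<ge> 0"
    proof (cases "norm (A u - y) = 0")
      case True
      have "0 \<le> g \<bullet> u + c * norm (A u - y)" using G y unfolding good_def by blast
      thus ?thesis using True by simp
    next
      case False
      hence m: "norm (A u - y) > 0" by simp
      have "- (g \<bullet> u) / norm (A u - y) \<le> cs" unfolding cs_def
      proof (rule cInf_greatest)
        show "Gs \<noteq> {}" using cG by blast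
        fix c' assume "c' \<in> Gs"
        hence "g \<bullet> u + c' * norm (A u - y) \<ge> 0" using y unfolding Gs_def good_def by blast
        thus "- (g \<bullet> u) / norm (A u - y) \<le> c'" using m by (simp add: field_simps)
      qed
      thus ?thesis using m by (simp add: field_simps)
    qed
  qed
  have cs_pos: "cs > 0"
  proof (rule ccontr)
    assume "\<not> cs > 0"
    hence "cs = 0" using cs0 by simp
    obtain y0 where y0: "y0 \<in> K" using Kne by blast
    have "0 \<le> g \<bullet> (-g) + cs * norm (A (-g) - y0)" using good_cs y0 unfolding good_def by blast
    hence "g \<bullet> (-g) \<ge> 0" using \<open>cs = 0\<close> by simp
    moreover have "g \<bullet> g > 0" using gne by simp
    ultimately show False by (simp add: inner_minus_right)
  qed
  have notgood: "\<not> good A g c' K" if "0 \<le> c'" "c' < cs" for c'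
  proof
    assume "good A g c' K"
    hence "c' \<in> Gs" using that unfolding Gs_def by simp
    hence "cs \<le> c'" unfolding cs_def using bdd by (simp add: cInf_lower)
    thus False using that by simp
  qed
  define cn where "cn = (\<lambda>n::nat. cs - (cs/2) * inverse (real n + 1))"
  have cn: "0 \<le> cn n \<and> cn n < cs" for n
  proof -
    have i: "0 < inverse (real n + 1)" "inverse (real n + 1) \<le> 1" by (auto simp: field_simps)
    have "(cs/2) * inverse (real n + 1) \<le> cs/2" using i cs_pos by (simp add: mult_left_le)
    moreover have "(cs/2) * inverse (real n + 1) > 0" using i cs_pos by simp
    ultimately show ?thesis unfolding cn_def by linarith
  qed
  have lim0: "(\<lambda>n::nat. inverse (real n + 1)) \<longlonglongrightarrow> 0"
    using LIMSEQ_inverse_real_of_nat_add[of 0] by (simp add: add.commute)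
  have cnlim: "cn \<longlonglongrightarrow> cs"
    unfolding cn_def using tendsto_diff[OF tendsto_const tendsto_mult[OF tendsto_const lim0], of cs "cs/2"]
    by simp
  define N where "N = (\<lambda>u. (u, A u)) ` {u. A u \<in> lsp K \<and> g \<bullet> u = 0}"
  have ex: "\<exists>p. snd p \<in> K \<and> g \<bullet> fst p + cn n * norm (A (fst p) - snd p) < 0 \<and> norm p = 1 \<and>
           (\<forall>z\<in>N. 1 \<le> dist p z)" for n
  proof -
    have "\<not> good A g (cn n) K" using notgood cn by blast
    then obtain u y where "y \<in> K" "g \<bullet> u + cn n * norm (A u - y) < 0" unfolding good_def by (auto simp: not_le)
    thus ?thesis using normalize[OF A K N_def] by blast
  qed
  then obtain r where r: "\<And>n. snd (r n) \<in> K \<and> g \<bullet> fst (r n) + cn n * norm (A (fst (r n)) - snd (r n)) < 0 \<and>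
      norm (r n) = 1 \<and> (\<forall>z\<in>N. 1 \<le> dist (r n) z)" by metis
  have "r n \<in> sphere 0 1" for n using r[of n] by simp
  then obtain l \<sigma> where l: "l \<in> sphere 0 1" "strict_mono \<sigma>" "(r \<circ> \<sigma>) \<longlonglongrightarrow> l"
    using compact_imp_seq_compact[OF compact_sphere[of "0::'a\<times>'b" 1]] unfolding seq_compact_def by metis
  have rl: "(\<lambda>n. r (\<sigma> n)) \<longlonglongrightarrow> l" using l(3) by (simp add: comp_def)
  have ly: "snd l \<in> K"
    by (rule closed_sequentially[OF Kc _ tendsto_snd[OF rl]]) (use r in blast)
  have ldist: "1 \<le> dist l z" if z: "z \<in> N" for z
  proof (rule LIMSEQ_le_const)
    show "(\<lambda>n. dist (r (\<sigma> n)) z) \<longlonglongrightarrow> dist l z" by (intro tendsto_intros rl)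
    show "\<exists>N. \<forall>n\<ge>N. 1 \<le> dist (r (\<sigma> n)) z" using r z by blast
  qed
  have blA: "bounded_linear A" using A linear_conv_bounded_linear by blast
  have Fl: "g \<bullet> fst l + cs * norm (A (fst l) - snd l) \<le> 0"
  proof (rule LIMSEQ_le_const2)
    have f: "(\<lambda>n. fst (r (\<sigma> n))) \<longlonglongrightarrow> fst l" by (rule tendsto_fst[OF rl])
    have s: "(\<lambda>n. snd (r (\<sigma> n))) \<longlonglongrightarrow> snd l" by (rule tendsto_snd[OF rl])
    have Af: "(\<lambda>n. A (fst (r (\<sigma> n)))) \<longlonglongrightarrow> A (fst l)" by (rule bounded_linear.tendsto[OF blA f])
    have cs': "(\<lambda>n. cn (\<sigma> n)) \<longlonglongrightarrow> cs" using LIMSEQ_subseq_LIMSEQ[OF cnlim l(2)] by (simp add: comp_def)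
    show "(\<lambda>n. g \<bullet> fst (r (\<sigma> n)) + cn (\<sigma> n) * norm (A (fst (r (\<sigma> n))) - snd (r (\<sigma> n))))
        \<longlonglongrightarrow> g \<bullet> fst l + cs * norm (A (fst l) - snd l)"
      by (intro tendsto_add tendsto_inner tendsto_const f tendsto_mult cs' tendsto_norm tendsto_diff Af s)
    show "\<exists>N. \<forall>n\<ge>N. g \<bullet> fst (r (\<sigma> n)) + cn (\<sigma> n) * norm (A (fst (r (\<sigma> n))) - snd (r (\<sigma> n))) \<le> 0"
      using r by (meson less_imp_le)
  qed
  have F0: "g \<bullet> fst l + cs * norm (A (fst l) - snd l) = 0"
    using Fl good_cs ly unfolding good_def by (meson antisym)
  show ?thesis
  proof (cases "A (fst l) = snd l")
    case False
    then obtain ws where "ws \<in> rnormal K (snd l)" "g + adjoint A ws = 0"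
      using mult_from_min[OF A good_cs cs0 ly False F0] by blast
    thus ?thesis using ly by blast
  next
    case True
    hence gu: "g \<bullet> fst l = 0" using F0 by simp
    have "A (fst l) \<notin> lsp K"
    proof
      assume "A (fst l) \<in> lsp K"
      hence "l \<in> N" unfolding N_def using gu True by (auto intro!: image_eqI[of _ _ "fst l"] simp: prod_eq_iff)
      thus False using ldist[of l] by simp
    qed
    moreover have "A (fst l) \<in> K" using True ly by simp
    ultimately show ?thesis using gu by (intro disjI2) blast
  qed
qed

definition LC :: "'a::euclidean_space set \<Rightarrow> 'a \<Rightarrow> real \<Rightarrow> bool" where
  "LC S y \<delta> \<longleftrightarrow> (\<forall>x\<in>S. x \<in> ball y \<delta> \<longrightarrow>
      (\<forall>lam::real. lam \<ge> 0 \<longrightarrow> y + lam *\<^sub>R (x - y) \<in> ball y \<delta> \<longrightarrow> y + lam *\<^sub>R (x - y) \<in> S))"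

lemma LC_mono: assumes "LC S y \<delta>" "\<delta>' \<le> \<delta>" shows "LC S y \<delta>'"
  unfolding LC_def
proof (intro ballI impI allI)
  fix x and lam :: real assume x: "x \<in> S" "x \<in> ball y \<delta>'" and l: "lam \<ge> 0" "y + lam *\<^sub>R (x - y) \<in> ball y \<delta>'"
  have "x \<in> ball y \<delta>" "y + lam *\<^sub>R (x - y) \<in> ball y \<delta>" using x(2) l(2) assms(2) by auto
  thus "y + lam *\<^sub>R (x - y) \<in> S" using assms(1) x(1) l(1) unfolding LC_def by blast
qed

lemma LC_Inter: "(\<And>S. S \<in> H \<Longrightarrow> LC S y \<delta>) \<Longrightarrow> LC (\<Inter>H) y \<delta>"
  unfolding LC_def by blast

lemma LC_Union: "(\<And>S. S \<in> F \<Longrightarrow> LC S y \<delta>) \<Longrightarrow> LC (\<Union>F) y \<delta>"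
  unfolding LC_def by blast

lemma LC_common:
  assumes "finite F" "\<And>S. S \<in> F \<Longrightarrow> \<exists>\<delta>>0. LC S y \<delta>"
  shows "\<exists>\<delta>>0. \<forall>S\<in>F. LC S y \<delta>"
  using assms
proof (induction F rule: finite_induct)
  case empty thus ?case by (intro exI[of _ 1]) simp
next
  case (insert S F)
  obtain \<delta>1 where d1: "\<delta>1 > 0" "\<forall>S\<in>F. LC S y \<delta>1" using insert by blast
  obtain \<delta>2 where d2: "\<delta>2 > 0" "LC S y \<delta>2" using insert by blast
  show ?case using d1 d2 LC_mono[of _ y _ "min \<delta>1 \<delta>2"]
    by (intro exI[of _ "min \<delta>1 \<delta>2"]) auto
qed

lemma LC_halfspace:
  fixes a :: "'a::euclidean_space"
  assumes a: "a \<noteq> 0"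
  shows "\<exists>\<delta>>0. LC {x. a \<bullet> x \<le> b} y \<delta>"
proof -
  have na: "norm a > 0" using a by simp
  have key: "a \<bullet> x \<le> a \<bullet> y + norm a * dist y x" for x
  proof -
    have "a \<bullet> x = a \<bullet> y + a \<bullet> (x - y)" by (simp add: inner_diff_right)
    also have "a \<bullet> (x - y) \<le> norm a * norm (x - y)" by (rule norm_cauchy_schwarz)
    finally show ?thesis by (simp add: dist_norm norm_minus_commute)
  qed
  have key2: "a \<bullet> y \<le> a \<bullet> x + norm a * dist y x" for x
  proof -
    have "a \<bullet> y = a \<bullet> x + a \<bullet> (y - x)" by (simp add: inner_diff_right)
    also have "a \<bullet> (y - x) \<le> norm a * norm (y - x)" by (rule norm_cauchy_schwarz)
    finally show ?thesis by (simp add: dist_norm)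
  qed
  consider "a \<bullet> y < b" | "a \<bullet> y = b" | "a \<bullet> y > b" by linarith
  thus ?thesis
  proof cases
    case 1
    define \<delta> where "\<delta> = (b - a \<bullet> y) / norm a"
    have d: "\<delta> > 0" using 1 na unfolding \<delta>_def by simp
    have "z \<in> {x. a \<bullet> x \<le> b}" if "z \<in> ball y \<delta>" for z
    proof -
      have "norm a * dist y z < norm a * \<delta>" using that na by simp
      also have "norm a * \<delta> = b - a \<bullet> y" unfolding \<delta>_def using na by simp
      finally show ?thesis using key[of z] by simp
    qed
    thus ?thesis using d unfolding LC_def by blast
  next
    case 2
    have "LC {x. a \<bullet> x \<le> b} y 1" unfolding LC_def
    proof (intro ballI impI allI)
      fix x and lam :: real assume x: "x \<in> {x. a \<bullet> x \<le> b}" and l: "lam \<ge> 0"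
      have "a \<bullet> (y + lam *\<^sub>R (x - y)) = b + lam * (a \<bullet> x - b)"
        using 2 by (simp add: inner_add_right inner_diff_right)
      also have "\<dots> \<le> b" using x l by (simp add: mult_nonneg_nonpos)
      finally show "y + lam *\<^sub>R (x - y) \<in> {x. a \<bullet> x \<le> b}" by simp
    qed
    thus ?thesis by (intro exI[of _ 1]) simp
  next
    case 3
    define \<delta> where "\<delta> = (a \<bullet> y - b) / norm a"
    have d: "\<delta> > 0" using 3 na unfolding \<delta>_def by simp
    have "z \<notin> {x. a \<bullet> x \<le> b}" if "z \<in> ball y \<delta>" for z
    proof -
      have "norm a * dist y z < norm a * \<delta>" using that na by simp
      also have "norm a * \<delta> = a \<bullet> y - b" unfolding \<delta>_def using na by simp
      finally show ?thesis using key2[of z] by simp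
    qed
    hence "LC {x. a \<bullet> x \<le> b} y \<delta>" unfolding LC_def by blast
    thus ?thesis using d by blast
  qed
qed

lemma polyhedral_LC:
  assumes "polyhedral_set C"
  shows "\<exists>\<delta>>0. LC C y \<delta>"
proof -
  have "\<exists>F. finite F \<and> C = \<Union>F \<and>
     (\<forall>S\<in>F. \<exists>H. finite H \<and> S = \<Inter>H \<and> (\<forall>h\<in>H. \<exists>a b. a \<noteq> 0 \<and> h = {x. a \<bullet> x \<le> b}))"
    by (rule polyhedral_set_def[THEN iffD1, OF assms])
  then obtain F where F0: "finite F \<and> C = \<Union>F \<and>
     (\<forall>S\<in>F. \<exists>H. finite H \<and> S = \<Inter>H \<and> (\<forall>h\<in>H. \<exists>a b. a \<noteq> 0 \<and> h = {x. a \<bullet> x \<le> b}))" ..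
  note F = conjunct1[OF F0] conjunct1[OF conjunct2[OF F0]] conjunct2[OF conjunct2[OF F0]]
  have "\<exists>\<delta>>0. LC S y \<delta>" if S: "S \<in> F" for S
  proof -
    from F(3) S have "\<exists>H. finite H \<and> S = \<Inter>H \<and> (\<forall>h\<in>H. \<exists>a b. a \<noteq> 0 \<and> h = {x. a \<bullet> x \<le> b})" by (rule bspec)
    then obtain H where H0: "finite H \<and> S = \<Inter>H \<and> (\<forall>h\<in>H. \<exists>a b. a \<noteq> 0 \<and> h = {x. a \<bullet> x \<le> b})" ..
    note H = conjunct1[OF H0] conjunct1[OF conjunct2[OF H0]] conjunct2[OF conjunct2[OF H0]]
    have "\<exists>\<delta>>0. LC h y \<delta>" if "h \<in> H" for h
    proof -
      from H(3) that have "\<exists>a b. a \<noteq> 0 \<and> h = {x. a \<bullet> x \<le> b}" by (rule bspec)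
      then obtain a where "\<exists>b. a \<noteq> 0 \<and> h = {x. a \<bullet> x \<le> b}" ..
      then obtain b where ab0: "a \<noteq> 0 \<and> h = {x. a \<bullet> x \<le> b}" ..
      note ab = conjunct1[OF ab0] conjunct2[OF ab0]
      show ?thesis unfolding ab(2) by (rule LC_halfspace[OF ab(1)])
    qed
    then obtain \<delta> where d: "\<delta> > 0" "\<forall>h\<in>H. LC h y \<delta>" using LC_common[OF H(1), of y] by blast
    have "LC S y \<delta>" unfolding H(2) using d(2) by (intro LC_Inter) simp
    thus ?thesis using d(1) by blast
  qed
  then obtain \<delta> where d: "\<delta> > 0" "\<forall>S\<in>F. LC S y \<delta>" using LC_common[OF F(1), of y] by blast
  have "LC C y \<delta>" unfolding F(2) using d(2) by (intro LC_Union) simp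
  thus ?thesis using d(1) by blast
qed

lemma polyhedral_preimage:
  fixes C :: "'a::euclidean_space set"
  assumes P: "polyhedral_set C" and r: "r > 0"
  shows "polyhedral_set {x. v + r *\<^sub>R x \<in> C}"
proof -
  have "\<exists>F. finite F \<and> C = \<Union>F \<and>
     (\<forall>S\<in>F. \<exists>H. finite H \<and> S = \<Inter>H \<and> (\<forall>h\<in>H. \<exists>a b. a \<noteq> 0 \<and> h = {x. a \<bullet> x \<le> b}))"
    by (rule polyhedral_set_def[THEN iffD1, OF P])
  then obtain F where F0: "finite F \<and> C = \<Union>F \<and>
     (\<forall>S\<in>F. \<exists>H. finite H \<and> S = \<Inter>H \<and> (\<forall>h\<in>H. \<exists>a b. a \<noteq> 0 \<and> h = {x. a \<bullet> x \<le> b}))" ..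
  note F = conjunct1[OF F0] conjunct1[OF conjunct2[OF F0]] conjunct2[OF conjunct2[OF F0]]
  define pre where "pre = (\<lambda>S::'a set. {x. v + r *\<^sub>R x \<in> S})"
  have 1: "finite (pre ` F)" using F(1) by simp
  have 2: "{x. v + r *\<^sub>R x \<in> C} = \<Union>(pre ` F)" unfolding pre_def F(2) by auto
  have 3: "\<exists>H. finite H \<and> S' = \<Inter>H \<and> (\<forall>h\<in>H. \<exists>a b. a \<noteq> 0 \<and> h = {x. a \<bullet> x \<le> b})"
    if S': "S' \<in> pre ` F" for S'
  proof -
    obtain S where S: "S \<in> F" "S' = pre S" using S' by blast
    from F(3) S(1) have "\<exists>H. finite H \<and> S = \<Inter>H \<and> (\<forall>h\<in>H. \<exists>a b. a \<noteq> 0 \<and> h = {x. a \<bullet> x \<le> b})" by (rule bspec)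
    then obtain H where H0: "finite H \<and> S = \<Inter>H \<and> (\<forall>h\<in>H. \<exists>a b. a \<noteq> 0 \<and> h = {x. a \<bullet> x \<le> b})" ..
    note H = conjunct1[OF H0] conjunct1[OF conjunct2[OF H0]] conjunct2[OF conjunct2[OF H0]]
    have "finite (pre ` H)" using H(1) by simp
    moreover have "S' = \<Inter>(pre ` H)" unfolding S(2) H(2) pre_def by auto
    moreover have "\<exists>a b. a \<noteq> 0 \<and> h' = {x. a \<bullet> x \<le> b}" if h'H: "h' \<in> pre ` H" for h'
    proof -
      obtain h where h: "h \<in> H" "h' = pre h" using h'H by blast
      from H(3) h(1) have "\<exists>a b. a \<noteq> 0 \<and> h = {x. a \<bullet> x \<le> b}" by (rule bspec)
      then obtain a where "\<exists>b. a \<noteq> 0 \<and> h = {x. a \<bullet> x \<le> b}" ..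
      then obtain b where ab0: "a \<noteq> 0 \<and> h = {x. a \<bullet> x \<le> b}" ..
      note ab = conjunct1[OF ab0] conjunct2[OF ab0]
      have "h' = {x. (r *\<^sub>R a) \<bullet> x \<le> b - a \<bullet> v}"
        unfolding h(2) ab(2) pre_def by (auto simp: inner_add_right algebra_simps)
      moreover have "r *\<^sub>R a \<noteq> 0" using r ab(1) by simp
      ultimately show ?thesis by blast
    qed
    ultimately show ?thesis by blast
  qed
  show ?thesis
    by (rule polyhedral_set_def[THEN iffD2], rule exI[of _ "pre ` F"]) (use 1 2 3 in simp)
qed

lemma cone_scale_iff:
  assumes "cone Q" "\<epsilon> > 0" shows "\<epsilon> *\<^sub>R x \<in> Q \<longleftrightarrow> x \<in> Q"
proof
  assume h: "\<epsilon> *\<^sub>R x \<in> Q"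
  have allc: "\<forall>c\<ge>0. c *\<^sub>R (\<epsilon> *\<^sub>R x) \<in> Q" using assms(1) h unfolding cone_def by blast
  have i: "0 \<le> 1/\<epsilon>" using assms(2) by simp
  have "(1/\<epsilon>) *\<^sub>R (\<epsilon> *\<^sub>R x) \<in> Q" by (rule allc[rule_format, OF i])
  moreover have "(1/\<epsilon>) *\<^sub>R (\<epsilon> *\<^sub>R x) = x" using assms(2) by simp
  ultimately show "x \<in> Q" by simp
next
  assume "x \<in> Q" thus "\<epsilon> *\<^sub>R x \<in> Q" using assms unfolding cone_def by simp
qed

lemma lp_structure:
  assumes Kc: "closed K" and lp: "locally_polyhedral K y"
  shows "y \<in> K \<and> (\<exists>\<delta>>0. \<exists>C. polyhedral_set C \<and> (\<forall>x\<in>ball y \<delta>. x \<in> K \<longleftrightarrow> x \<in> C) \<and>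
            (\<forall>x\<in>ball y \<delta>. x \<in> K \<longleftrightarrow> x - y \<in> tcone K y))"
proof -
  have L: "y \<in> K \<and> (\<exists>W C. open W \<and> y \<in> W \<and> polyhedral_set C \<and> K \<inter> W = C \<inter> W)"
    by (rule locally_polyhedral_def[THEN iffD1, OF lp])
  hence y: "y \<in> K" by (rule conjunct1)
  from conjunct2[OF L] obtain W where "\<exists>C. open W \<and> y \<in> W \<and> polyhedral_set C \<and> K \<inter> W = C \<inter> W" ..
  then obtain C where WC: "open W \<and> y \<in> W \<and> polyhedral_set C \<and> K \<inter> W = C \<inter> W" ..
  have W: "open W" "y \<in> W" and C: "polyhedral_set C" and KC: "K \<inter> W = C \<inter> W" using WC by simp_all
  obtain \<delta>1 where d1: "\<delta>1 > 0" "ball y \<delta>1 \<subseteq> W" using W open_contains_ball by blast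
  obtain \<delta>2 where d2: "\<delta>2 > 0" "LC C y \<delta>2" using polyhedral_LC[OF C] by blast
  define \<delta> where "\<delta> = min \<delta>1 \<delta>2"
  have d: "\<delta> > 0" using d1 d2 unfolding \<delta>_def by simp
  have KCb: "x \<in> K \<longleftrightarrow> x \<in> C" if x: "x \<in> ball y \<delta>" for x
  proof -
    have "x \<in> W" using x d1(2) unfolding \<delta>_def by auto
    moreover have "x \<in> K \<inter> W \<longleftrightarrow> x \<in> C \<inter> W" by (simp only: KC)
    ultimately show ?thesis by simp
  qed
  have LCC: "LC C y \<delta>" using LC_mono[OF d2(2)] unfolding \<delta>_def by simp
  have LCK: "LC K y \<delta>" unfolding LC_def
  proof (intro ballI impI allI)
    fix x and lam :: real assume x: "x \<in> K" "x \<in> ball y \<delta>" and l: "lam \<ge> 0" "y + lam *\<^sub>R (x - y) \<in> ball y \<delta>"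
    have "x \<in> C" using KCb x by blast
    hence "y + lam *\<^sub>R (x - y) \<in> C" using LCC x(2) l unfolding LC_def by blast
    thus "y + lam *\<^sub>R (x - y) \<in> K" using KCb l(2) by blast
  qed
  have T: "x \<in> K \<longleftrightarrow> x - y \<in> tcone K y" if x: "x \<in> ball y \<delta>" for x
  proof
    assume xK: "x \<in> K"
    have "\<forall>e>0. \<exists>t v. 0 < t \<and> t < e \<and> norm (v - (x - y)) < e \<and> y + t *\<^sub>R v \<in> K"
    proof (intro allI impI)
      fix e :: real assume e: "e > 0"
      define t where "t = min (e/2) (1/2)"
      have t: "0 < t" "t < e" "t < 1" using e unfolding t_def by auto
      have "dist y (y + t *\<^sub>R (x - y)) = t * dist y x" using t by (simp add: dist_norm norm_minus_commute)
      also have "\<dots> \<le> dist y x" using t by (simp add: mult_left_le_one_le)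
      also have "\<dots> < \<delta>" using x by simp
      finally have "y + t *\<^sub>R (x - y) \<in> ball y \<delta>" by simp
      hence "y + t *\<^sub>R (x - y) \<in> K" using LCK xK x t(1) unfolding LC_def by simp
      thus "\<exists>t v. 0 < t \<and> t < e \<and> norm (v - (x - y)) < e \<and> y + t *\<^sub>R v \<in> K"
        using t e by (intro exI[of _ t] exI[of _ "x - y"]) simp
    qed
    thus "x - y \<in> tcone K y" using tcone_iff[OF y] by blast
  next
    assume dT: "x - y \<in> tcone K y"
    define d where "d = x - y"
    have nd: "norm d < \<delta>" using x unfolding d_def by (simp add: dist_norm norm_minus_commute)
    have "x \<in> closure K"
      unfolding closure_approachable
    proof (intro allI impI)
      fix \<epsilon> :: real assume eps: "\<epsilon> > 0"
      define e where "e = min (min \<epsilon> (\<delta> - norm d)) 1"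
      have e: "e > 0" "e \<le> \<epsilon>" "e \<le> \<delta> - norm d" "e \<le> 1" using eps nd unfolding e_def by auto
      obtain t v where tv: "0 < t" "t < e" "norm (v - d) < e" "y + t *\<^sub>R v \<in> K"
        using dT tcone_iff[OF y] e(1) unfolding d_def by blast
      have nv: "norm v < \<delta>" using tv(3) e(3) norm_triangle_ineq[of "v - d" d] by simp
      have "norm (t *\<^sub>R v) < \<delta>"
      proof -
        have "norm (t *\<^sub>R v) = t * norm v" using tv(1) by simp
        also have "\<dots> \<le> norm v" using tv(1,2) e(4) by (simp add: mult_left_le_one_le)
        finally show ?thesis using nv by simp
      qed
      hence inb: "y + t *\<^sub>R v \<in> ball y \<delta>" by (simp add: dist_norm)
      have HL: "\<And>lam. lam \<ge> 0 \<Longrightarrow> y + lam *\<^sub>R ((y + t *\<^sub>R v) - y) \<in> ball y \<delta> \<Longrightarrow>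
            y + lam *\<^sub>R ((y + t *\<^sub>R v) - y) \<in> K"
        using LCK tv(4) inb unfolding LC_def by blast
      have eqv: "y + (1/t) *\<^sub>R ((y + t *\<^sub>R v) - y) = y + v" using tv(1) by simp
      have i: "0 \<le> 1/t" using tv(1) by simp
      have "y + v \<in> ball y \<delta>" using nv by (simp add: dist_norm)
      hence "y + (1/t) *\<^sub>R ((y + t *\<^sub>R v) - y) \<in> ball y \<delta>" by (simp only: eqv)
      hence "y + (1/t) *\<^sub>R ((y + t *\<^sub>R v) - y) \<in> K" by (rule HL[OF i])
      hence "y + v \<in> K" by (simp only: eqv)
      moreover have "dist (y + v) x < \<epsilon>"
        using tv(3) e(2) unfolding d_def by (simp add: dist_norm algebra_simps)
      ultimately show "\<exists>k\<in>K. dist k x < \<epsilon>" by blast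
    qed
    thus "x \<in> K" using Kc closure_closed by blast
  qed
  have "polyhedral_set C \<and> (\<forall>x\<in>ball y \<delta>. x \<in> K \<longleftrightarrow> x \<in> C) \<and>
            (\<forall>x\<in>ball y \<delta>. x \<in> K \<longleftrightarrow> x - y \<in> tcone K y)"
    using C KCb T by simp
  hence "\<exists>C. polyhedral_set C \<and> (\<forall>x\<in>ball y \<delta>. x \<in> K \<longleftrightarrow> x \<in> C) \<and>
            (\<forall>x\<in>ball y \<delta>. x \<in> K \<longleftrightarrow> x - y \<in> tcone K y)" by (rule exI)
  thus ?thesis using y d by (intro conjI exI[of _ \<delta>]) simp_all
qed

lemma tcone_local:
  assumes r: "\<rho> > 0" and E: "\<And>x. x \<in> ball w \<rho> \<Longrightarrow> x \<in> S1 \<longleftrightarrow> x \<in> S2" and w: "w \<in> S1"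
  shows "tcone S1 w \<subseteq> tcone S2 w"
proof
  have w2: "w \<in> S2" using E[of w] w r by simp
  fix d assume d: "d \<in> tcone S1 w"
  have "\<forall>e>0. \<exists>t v. 0 < t \<and> t < e \<and> norm (v - d) < e \<and> w + t *\<^sub>R v \<in> S2"
  proof (intro allI impI)
    fix e :: real assume e: "e > 0"
    define e' where "e' = min e (min 1 (\<rho> / (norm d + 2)))"
    have "\<rho> / (norm d + 2) > 0" using r by (simp add: add_nonneg_pos)
    hence e': "e' > 0" "e' \<le> e" "e' \<le> 1" "e' \<le> \<rho> / (norm d + 2)" using e r unfolding e'_def by auto
    obtain t v where tv: "0 < t" "t < e'" "norm (v - d) < e'" "w + t *\<^sub>R v \<in> S1"
      using d tcone_iff[OF w] e'(1) by blast
    have nv: "norm v \<le> norm d + 1" using tv(3) e'(3) norm_triangle_ineq[of "v - d" d] by simp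
    have "norm (t *\<^sub>R v) = t * norm v" using tv(1) by simp
    also have "\<dots> \<le> e' * (norm d + 1)" using tv(1,2) nv by (intro mult_mono) simp_all
    also have "\<dots> \<le> (\<rho> / (norm d + 2)) * (norm d + 1)" using e'(4) by (intro mult_right_mono) simp_all
    also have "\<dots> < \<rho>"
    proof -
      have "(\<rho> / (norm d + 2)) * (norm d + 1) = \<rho> * ((norm d + 1) / (norm d + 2))" by simp
      also have "\<dots> < \<rho> * 1"
      proof (intro mult_strict_left_mono r)
        have "norm d + 2 > 0" by (simp add: add_nonneg_pos)
        thus "(norm d + 1) / (norm d + 2) < 1" by (simp add: divide_less_eq)
      qed
      finally show ?thesis by simp
    qed
    finally have "w + t *\<^sub>R v \<in> ball w \<rho>" by (simp add: dist_norm)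
    hence "w + t *\<^sub>R v \<in> S2" using E tv(4) by blast
    thus "\<exists>t v. 0 < t \<and> t < e \<and> norm (v - d) < e \<and> w + t *\<^sub>R v \<in> S2"
      using tv(1,2,3) e'(2) by (intro exI[of _ t] exI[of _ v]) simp
  qed
  thus "d \<in> tcone S2 w" using tcone_iff[OF w2] by blast
qed

lemma tcone_transl:
  assumes z: "z \<in> Q"
  shows "tcone {x. x - y \<in> Q} (y + z) = tcone Q z"
proof -
  have m: "y + z \<in> {x. x - y \<in> Q}" using z by simp
  have "d \<in> tcone {x. x - y \<in> Q} (y + z) \<longleftrightarrow> d \<in> tcone Q z" for d
  proof -
    have eq: "(y + z + t *\<^sub>R v \<in> {x. x - y \<in> Q}) \<longleftrightarrow> z + t *\<^sub>R v \<in> Q" for t v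
      by (simp add: algebra_simps)
    show ?thesis unfolding tcone_iff[OF m] tcone_iff[OF z] eq ..
  qed
  thus ?thesis by blast
qed

lemma tcone_base_scale_sub:
  assumes Q: "cone Q" and z: "z \<in> Q" and eps: "\<epsilon> > 0"
  shows "tcone Q z \<subseteq> tcone Q (\<epsilon> *\<^sub>R z)"
proof
  have ez: "\<epsilon> *\<^sub>R z \<in> Q" using cone_scale_iff[OF Q eps] z by simp
  fix d assume d: "d \<in> tcone Q z"
  have "\<forall>e>0. \<exists>t v. 0 < t \<and> t < e \<and> norm (v - d) < e \<and> \<epsilon> *\<^sub>R z + t *\<^sub>R v \<in> Q"
  proof (intro allI impI)
    fix e :: real assume e: "e > 0"
    define e' where "e' = min e (e / \<epsilon>)"
    have e': "e' > 0" "e' \<le> e" "e' \<le> e / \<epsilon>" using e eps unfolding e'_def by auto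
    obtain t v where tv: "0 < t" "t < e'" "norm (v - d) < e'" "z + t *\<^sub>R v \<in> Q"
      using d tcone_iff[OF z] e'(1) by blast
    have "\<epsilon> *\<^sub>R (z + t *\<^sub>R v) \<in> Q" using cone_scale_iff[OF Q eps] tv(4) by simp
    hence "\<epsilon> *\<^sub>R z + (\<epsilon> * t) *\<^sub>R v \<in> Q" by (simp add: scaleR_add_right)
    moreover have "\<epsilon> * t < e"
    proof -
      have "\<epsilon> * t < \<epsilon> * (e / \<epsilon>)" using tv(2) e'(3) eps by (intro mult_strict_left_mono) simp_all
      thus ?thesis using eps by simp
    qed
    ultimately show "\<exists>t v. 0 < t \<and> t < e \<and> norm (v - d) < e \<and> \<epsilon> *\<^sub>R z + t *\<^sub>R v \<in> Q"
      using tv(1,3) e'(2) eps by (intro exI[of _ "\<epsilon> * t"] exI[of _ v]) simp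
  qed
  thus "d \<in> tcone Q (\<epsilon> *\<^sub>R z)" using tcone_iff[OF ez] by blast
qed

lemma tcone_base_scale:
  assumes Q: "cone Q" and z: "z \<in> Q" and eps: "\<epsilon> > 0"
  shows "tcone Q (\<epsilon> *\<^sub>R z) = tcone Q z"
proof
  show "tcone Q z \<subseteq> tcone Q (\<epsilon> *\<^sub>R z)" by (rule tcone_base_scale_sub[OF Q z eps])
  have ez: "\<epsilon> *\<^sub>R z \<in> Q" using cone_scale_iff[OF Q eps] z by simp
  have "tcone Q (\<epsilon> *\<^sub>R z) \<subseteq> tcone Q ((1/\<epsilon>) *\<^sub>R (\<epsilon> *\<^sub>R z))"
    by (rule tcone_base_scale_sub[OF Q ez]) (use eps in simp)
  thus "tcone Q (\<epsilon> *\<^sub>R z) \<subseteq> tcone Q z" using eps by simp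
qed

lemma lp_get:
  assumes Kc: "closed K" and lp: "locally_polyhedral K y"
  obtains \<delta> C where "y \<in> K" "\<delta> > 0" "polyhedral_set C" "\<And>x. x \<in> ball y \<delta> \<Longrightarrow> x \<in> K \<longleftrightarrow> x \<in> C"
    "\<And>x. x \<in> ball y \<delta> \<Longrightarrow> x \<in> K \<longleftrightarrow> x - y \<in> tcone K y"
proof -
  note L = lp_structure[OF Kc lp]
  from conjunct2[OF L] obtain \<delta> where "\<delta> > 0 \<and> (\<exists>C. polyhedral_set C \<and> (\<forall>x\<in>ball y \<delta>. x \<in> K \<longleftrightarrow> x \<in> C) \<and>
            (\<forall>x\<in>ball y \<delta>. x \<in> K \<longleftrightarrow> x - y \<in> tcone K y))" ..
  then obtain C where "\<delta> > 0 \<and> polyhedral_set C \<and> (\<forall>x\<in>ball y \<delta>. x \<in> K \<longleftrightarrow> x \<in> C) \<and>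
            (\<forall>x\<in>ball y \<delta>. x \<in> K \<longleftrightarrow> x - y \<in> tcone K y)" by blast
  thus ?thesis using that conjunct1[OF L] by blast
qed

lemma lp_transfer:
  assumes Kc: "closed K" and lp: "locally_polyhedral K y" and w': "w' \<in> tcone K y"
    and ws: "ws \<in> rnormal (tcone K y) w'"
  shows "\<exists>w. w \<in> K \<and> ws \<in> rnormal K w"
proof -
  define Q where "Q = tcone K y"
  have Qc: "cone Q" unfolding Q_def by (rule tcone_cone)
  obtain \<delta> C where y: "y \<in> K" and d: "\<delta> > 0" and E: "\<And>x. x \<in> ball y \<delta> \<Longrightarrow> x \<in> K \<longleftrightarrow> x - y \<in> Q"
    using lp_get[OF Kc lp] unfolding Q_def by metis
  have wQ: "w' \<in> Q" using w' unfolding Q_def .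
  define \<epsilon> where "\<epsilon> = \<delta> / (2 * (norm w' + 1))"
  have eps: "\<epsilon> > 0" unfolding \<epsilon>_def using d by (simp add: add_nonneg_pos)
  define z where "z = \<epsilon> *\<^sub>R w'"
  have zQ: "z \<in> Q" unfolding z_def using cone_scale_iff[OF Qc eps] wQ by simp
  have nz: "norm z < \<delta> / 2"
  proof -
    have "norm z = \<epsilon> * norm w'" unfolding z_def using eps by simp
    also have "\<dots> = (\<delta>/2) * (norm w' / (norm w' + 1))" unfolding \<epsilon>_def by (simp add: field_simps)
    also have "\<dots> < (\<delta>/2) * 1"
    proof (intro mult_strict_left_mono)
      have "norm w' + 1 > 0" by (simp add: add_nonneg_pos)
      thus "norm w' / (norm w' + 1) < 1" by (simp add: divide_less_eq)
    qed (use d in simp)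
    finally show ?thesis by simp
  qed
  define w where "w = y + z"
  have wb: "w \<in> ball y \<delta>" unfolding w_def using nz d by (simp add: dist_norm)
  have wK: "w \<in> K" using E[OF wb] zQ unfolding w_def by simp
  have E': "x \<in> K \<longleftrightarrow> x \<in> {x. x - y \<in> Q}" if x: "x \<in> ball w (\<delta>/2)" for x
  proof -
    have "dist y x \<le> dist y w + dist w x" by (rule dist_triangle)
    also have "\<dots> < \<delta>" using x nz unfolding w_def by (simp add: dist_norm)
    finally show ?thesis using E[of x] by simp
  qed
  have w2: "w \<in> {x. x - y \<in> Q}" using zQ unfolding w_def by simp
  have d2: "\<delta>/2 > 0" using d by simp
  have "tcone K w = tcone {x. x - y \<in> Q} w"
  proof
    show "tcone K w \<subseteq> tcone {x. x - y \<in> Q} w" by (rule tcone_local[OF d2 E' wK])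
    show "tcone {x. x - y \<in> Q} w \<subseteq> tcone K w" by (rule tcone_local[OF d2 _ w2]) (use E' in blast)
  qed
  also have "\<dots> = tcone Q z" unfolding w_def by (rule tcone_transl[OF zQ])
  also have "\<dots> = tcone Q w'" unfolding z_def by (rule tcone_base_scale[OF Qc wQ eps])
  finally have TT: "tcone K w = tcone Q w'" .
  have "ws \<in> polar (tcone Q w')" using ws wQ unfolding rnormal_def Q_def by simp
  hence "ws \<in> rnormal K w" unfolding rnormal_def using wK TT by simp
  thus ?thesis using wK by blast
qed

lemma lp_tcone_all:
  assumes Kc: "closed K" and lp: "locally_polyhedral K y" and q: "q \<in> tcone K y"
  shows "locally_polyhedral (tcone K y) q"
proof -
  define Q where "Q = tcone K y"
  have Qc: "cone Q" unfolding Q_def by (rule tcone_cone)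
  obtain \<delta> C where y: "y \<in> K" and d: "\<delta> > 0" and C: "polyhedral_set C"
    and E1: "\<And>x. x \<in> ball y \<delta> \<Longrightarrow> x \<in> K \<longleftrightarrow> x \<in> C"
    and E2: "\<And>x. x \<in> ball y \<delta> \<Longrightarrow> x \<in> K \<longleftrightarrow> x - y \<in> Q"
    using lp_get[OF Kc lp] unfolding Q_def by metis
  define \<epsilon> where "\<epsilon> = \<delta> / (2 * (norm q + 1))"
  have eps: "\<epsilon> > 0" unfolding \<epsilon>_def using d by (simp add: add_nonneg_pos)
  define V where "V = ball (0::'a) (\<delta> / \<epsilon>)"
  have de: "\<delta> / \<epsilon> = 2 * (norm q + 1)" unfolding \<epsilon>_def using d by (simp add: field_simps)
  have qV: "q \<in> V" unfolding V_def de by (simp add: add_nonneg_pos)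
  define C2 where "C2 = {x. y + \<epsilon> *\<^sub>R x \<in> C}"
  have C2: "polyhedral_set C2" unfolding C2_def by (rule polyhedral_preimage[OF C eps])
  have QV: "x \<in> Q \<longleftrightarrow> x \<in> C2" if x: "x \<in> V" for x
  proof -
    have "norm x < \<delta> / \<epsilon>" using x unfolding V_def by simp
    hence "\<epsilon> * norm x < \<delta>" using eps by (simp add: field_simps)
    hence b: "y + \<epsilon> *\<^sub>R x \<in> ball y \<delta>" using eps by (simp add: dist_norm)
    have "x \<in> Q \<longleftrightarrow> \<epsilon> *\<^sub>R x \<in> Q" using cone_scale_iff[OF Qc eps] by simp
    also have "\<dots> \<longleftrightarrow> y + \<epsilon> *\<^sub>R x \<in> K" using E2[OF b] by simp
    also have "\<dots> \<longleftrightarrow> y + \<epsilon> *\<^sub>R x \<in> C" using E1[OF b] .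
    finally show ?thesis unfolding C2_def by simp
  qed
  have "Q \<inter> V = C2 \<inter> V" using QV by blast
  moreover have "open V" unfolding V_def by simp
  moreover have qQ: "q \<in> Q" using q unfolding Q_def .
  ultimately have "q \<in> Q \<and> (\<exists>W C. open W \<and> q \<in> W \<and> polyhedral_set C \<and> Q \<inter> W = C \<inter> W)"
    using qV C2 by blast
  thus ?thesis unfolding Q_def by (rule locally_polyhedral_def[THEN iffD2])
qed

abbreviation ftc :: "'b::euclidean_space set \<Rightarrow> 'b list \<Rightarrow> 'b set" where
  "ftc K vs \<equiv> foldl (\<lambda>C v. tcone C v) K vs"

lemma main:
  fixes A :: "'a::euclidean_space \<Rightarrow> 'b::euclidean_space"
  assumes A: "linear A" and c: "c \<ge> 0"
  shows "closed K \<Longrightarrow> cone K \<Longrightarrow> K \<noteq> {} \<Longrightarrow> good A g c K \<Longrightarrow>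
    \<exists>us w ws. w \<in> ftc K (map A us) \<and> ws \<in> rnormal (ftc K (map A us)) w \<and> g + adjoint A ws = 0 \<and>
      (\<forall>l < length us. A (us ! l) \<in> ftc K (map A (take l us)) \<and>
         A (us ! l) \<notin> Lsp (ftc K (map A (take l us))) \<and> g \<bullet> (us ! l) = 0 \<and>
         \<not> locally_polyhedral (ftc K (map A (take l us))) (A (us ! l)))"
proof (induction "DIM('b) - dim (lsp K)" arbitrary: K rule: less_induct)
  case less
  note Kc = less.prems(1) and Kcone = less.prems(2) and Kne = less.prems(3) and G = less.prems(4)
  from step[OF A Kc Kcone Kne G c]
  show ?case
  proof (elim disjE exE conjE)
    fix w ws assume w: "w \<in> K" "ws \<in> rnormal K w" "g + adjoint A ws = 0"
    show ?case by (intro exI[of _ "[]"] exI[of _ w] exI[of _ ws]) (use w in simp)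
  next
    fix u assume u: "A u \<in> K" "g \<bullet> u = 0" "A u \<notin> lsp K"
    define K' where "K' = tcone K (A u)"
    have K'c: "closed K'" unfolding K'_def by (rule tcone_closed)
    have K'cone: "cone K'" unfolding K'_def by (rule tcone_cone)
    have K'ne: "K' \<noteq> {}" unfolding K'_def using zero_in_tcone[OF u(1)] by blast
    have G': "good A g c K'" unfolding K'_def by (rule good_tcone[OF A G c u(1,2)])
    have sub: "lsp K \<subseteq> lsp K'" unfolding K'_def by (rule lsp_tcone_mono[OF Kcone u(1)])
    have inn: "A u \<in> lsp K'" unfolding K'_def by (rule base_in_lsp_tcone[OF Kcone u(1)])
    have "lsp K \<subset> lsp K'" using sub inn u(3) by blast
    hence "dim (lsp K) < dim (lsp K')"
      using lsp_subspace[OF Kcone] lsp_subspace[OF K'cone] by (metis dim_psubset span_eq_iff)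
    moreover have "dim (lsp K') \<le> DIM('b)" by (rule dim_subset_UNIV)
    ultimately have "DIM('b) - dim (lsp K') < DIM('b) - dim (lsp K)" by linarith
    from less.hyps[OF this K'c K'cone K'ne G'] obtain us' w' ws' where
      IH: "w' \<in> ftc K' (map A us')" "ws' \<in> rnormal (ftc K' (map A us')) w'" "g + adjoint A ws' = 0"
        "\<forall>l < length us'. A (us' ! l) \<in> ftc K' (map A (take l us')) \<and>
         A (us' ! l) \<notin> Lsp (ftc K' (map A (take l us'))) \<and> g \<bullet> (us' ! l) = 0 \<and>
         \<not> locally_polyhedral (ftc K' (map A (take l us'))) (A (us' ! l))" by blast
    show ?case
    proof (cases "locally_polyhedral K (A u)")
      case False
      have f: "ftc K (map A (u # xs)) = ftc K' (map A xs)" for xs unfolding K'_def by simp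
      have "\<forall>l < length (u # us'). A ((u # us') ! l) \<in> ftc K (map A (take l (u # us'))) \<and>
         A ((u # us') ! l) \<notin> Lsp (ftc K (map A (take l (u # us')))) \<and> g \<bullet> ((u # us') ! l) = 0 \<and>
         \<not> locally_polyhedral (ftc K (map A (take l (u # us')))) (A ((u # us') ! l))"
      proof (intro allI impI)
        fix l assume l: "l < length (u # us')"
        show "A ((u # us') ! l) \<in> ftc K (map A (take l (u # us'))) \<and>
         A ((u # us') ! l) \<notin> Lsp (ftc K (map A (take l (u # us')))) \<and> g \<bullet> ((u # us') ! l) = 0 \<and>
         \<not> locally_polyhedral (ftc K (map A (take l (u # us')))) (A ((u # us') ! l))"
        proof (cases l)
          case 0
          thus ?thesis using u False Lsp_eq[OF Kcone] by simp
        next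
          case (Suc j)
          have j: "j < length us'" using l Suc by simp
          have "take l (u # us') = u # take j us'" "(u # us') ! l = us' ! j" using Suc by simp_all
          thus ?thesis using IH(4) j f by simp
        qed
      qed
      moreover have "w' \<in> ftc K (map A (u # us'))" "ws' \<in> rnormal (ftc K (map A (u # us'))) w'"
        using IH(1,2) f by simp_all
      ultimately show ?thesis using IH(3) by blast
    next
      case True
      have "us' = []"
      proof (rule ccontr)
        assume "us' \<noteq> []"
        hence "0 < length us'" by simp
        with IH(4) have "A (us' ! 0) \<in> K'" "\<not> locally_polyhedral K' (A (us' ! 0))" by auto
        moreover have "locally_polyhedral K' (A (us' ! 0))"
          unfolding K'_def by (rule lp_tcone_all[OF Kc True]) (use calculation in \<open>simp add: K'_def\<close>)
        ultimately show False by simp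
      qed
      hence w': "w' \<in> tcone K (A u)" "ws' \<in> rnormal (tcone K (A u)) w'"
        using IH(1,2) unfolding K'_def by simp_all
      obtain w where ww: "w \<in> K" "ws' \<in> rnormal K w" using lp_transfer[OF Kc True w'] by blast
      show ?thesis by (intro exI[of _ "[]"] exI[of _ w] exI[of _ ws']) (use ww IH(3) in simp)
    qed
  qed
qed

lemma initial_good:
  fixes A :: "'a::euclidean_space \<Rightarrow> 'b::euclidean_space"
  assumes A: "linear A" and Kc: "closed K" and Kcone: "cone K" and K0: "0 \<in> K"
    and pol: "\<And>u. A u \<in> K \<Longrightarrow> g \<bullet> u \<ge> 0"
    and sr: "metrically_subregular (\<lambda>u. {A u - t | t. t \<in> K}) 0 0"
  shows "\<exists>c\<ge>0. good A g c K"
proof -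
  have "\<exists>W \<kappa>. open W \<and> 0 \<in> W \<and> \<kappa> > 0 \<and>
        (\<forall>x\<in>W. {A x - t | t. t \<in> K} \<noteq> {} \<longrightarrow>
           infdist x {y. 0 \<in> {A y - t | t. t \<in> K}} \<le> \<kappa> * infdist 0 {A x - t | t. t \<in> K})"
    using metrically_subregular_def[THEN iffD1, OF sr] by (rule conjunct2)
  then obtain W where "\<exists>\<kappa>. open W \<and> 0 \<in> W \<and> \<kappa> > 0 \<and>
        (\<forall>x\<in>W. {A x - t | t. t \<in> K} \<noteq> {} \<longrightarrow>
           infdist x {y. 0 \<in> {A y - t | t. t \<in> K}} \<le> \<kappa> * infdist 0 {A x - t | t. t \<in> K})" ..
  then obtain \<kappa> where W: "open W" "0 \<in> W" and kap: "\<kappa> > 0" and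
    S: "\<forall>x\<in>W. {A x - t | t. t \<in> K} \<noteq> {} \<longrightarrow>
           infdist x {y. 0 \<in> {A y - t | t. t \<in> K}} \<le> \<kappa> * infdist 0 {A x - t | t. t \<in> K}" by blast
  define U where "U = {u. A u \<in> K}"
  have U_eq: "{y. 0 \<in> {A y - t | t. t \<in> K}} = U" unfolding U_def by auto
  have Uc: "closed U"
  proof -
    have "U = A -` K" unfolding U_def by auto
    have blA: "bounded_linear A" using A linear_conv_bounded_linear by blast
    thus ?thesis using continuous_closed_vimage[OF Kc linear_continuous_at[OF blA]] \<open>U = A -` K\<close> by simp
  qed
  have "A 0 = 0" using A by (rule linear_0)
  hence "0 \<in> U" unfolding U_def using K0 by simp
  hence Une: "U \<noteq> {}" by blast
  define c where "c = \<kappa> * norm g"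
  have c: "c \<ge> 0" unfolding c_def using kap by simp
  obtain r where r: "r > 0" "ball 0 r \<subseteq> W" using W open_contains_ball by blast
  have loc: "g \<bullet> x + c * norm (A x - y) \<ge> 0" if x: "x \<in> W" and y: "y \<in> K" for x y
  proof -
    have ne: "{A x - t | t. t \<in> K} \<noteq> {}" using y by blast
    have "infdist x U \<le> \<kappa> * infdist 0 {A x - t | t. t \<in> K}" using S x ne U_eq by simp
    also have "infdist 0 {A x - t | t. t \<in> K} \<le> dist 0 (A x - y)" by (rule infdist_le) (use y in blast)
    hence "\<kappa> * infdist 0 {A x - t | t. t \<in> K} \<le> \<kappa> * norm (A x - y)" using kap by simp
    finally have id: "infdist x U \<le> \<kappa> * norm (A x - y)" .
    obtain p where p: "p \<in> U" "infdist x U = dist x p" using infdist_attains_inf[OF Uc Une] by blast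
    have gp: "g \<bullet> p \<ge> 0" using p(1) pol unfolding U_def by blast
    have "g \<bullet> x = g \<bullet> p + g \<bullet> (x - p)" by (simp add: inner_diff_right)
    moreover have "- (g \<bullet> (x - p)) \<le> norm g * norm (x - p)"
      using norm_cauchy_schwarz[of g "p - x"] by (simp add: inner_diff_right norm_minus_commute)
    moreover have "norm g * norm (x - p) \<le> c * norm (A x - y)"
    proof -
      have "norm (x - p) \<le> \<kappa> * norm (A x - y)" using id p(2) by (simp add: dist_norm)
      hence "norm g * norm (x - p) \<le> norm g * (\<kappa> * norm (A x - y))" by (simp add: mult_left_mono)
      thus ?thesis unfolding c_def by (simp add: mult.assoc mult.left_commute)
    qed
    ultimately show ?thesis using gp by linarith
  qed
  have "good A g c K" unfolding good_def
  proof (intro allI ballI)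
    fix u :: 'a and y assume y: "y \<in> K"
    define s where "s = r / (2 * (norm u + 1))"
    have s: "s > 0" unfolding s_def using r by (simp add: add_nonneg_pos)
    have "norm (s *\<^sub>R u) < r"
    proof -
      have "norm (s *\<^sub>R u) = (r/2) * (norm u / (norm u + 1))" unfolding s_def using r by (simp add: field_simps)
      also have "\<dots> < (r/2) * 1"
      proof (intro mult_strict_left_mono)
        have "norm u + 1 > 0" by (simp add: add_nonneg_pos)
        thus "norm u / (norm u + 1) < 1" by (simp add: divide_less_eq)
      qed (use r in simp)
      finally show ?thesis using r by simp
    qed
    hence "s *\<^sub>R u \<in> W" using r by auto
    moreover have "s *\<^sub>R y \<in> K" using cone_scale_iff[OF Kcone s] y by simp
    ultimately have "g \<bullet> (s *\<^sub>R u) + c * norm (A (s *\<^sub>R u) - s *\<^sub>R y) \<ge> 0" by (rule loc)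
    moreover have "norm (A (s *\<^sub>R u) - s *\<^sub>R y) = s * norm (A u - y)"
    proof -
      have "A (s *\<^sub>R u) - s *\<^sub>R y = s *\<^sub>R (A u - y)" using A by (simp add: linear_scale scaleR_diff_right)
      thus ?thesis using s by simp
    qed
    ultimately have "s * (g \<bullet> u + c * norm (A u - y)) \<ge> 0" using s by (simp add: algebra_simps)
    thus "g \<bullet> u + c * norm (A u - y) \<ge> 0" using s by (simp add: zero_le_mult_iff)
  qed
  thus ?thesis using c by blast
qed

theorem theorem4p2:
  fixes f :: "'a::euclidean_space \<Rightarrow> real" and gf :: "'a \<Rightarrow> 'a"
    and P :: "'a \<Rightarrow> 'b::euclidean_space" and P' :: "'a \<Rightarrow> 'a \<Rightarrow>\<^sub>L 'b"
    and D :: "'b set" and \<Omega> :: "'a set" and zbar :: 'a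
  assumes f_deriv: "\<And>z. (f has_derivative (\<lambda>u. gf z \<bullet> u)) (at z)"
    and f_C1: "continuous_on UNIV gf"
    and P_deriv: "\<And>z. (P has_derivative blinfun_apply (P' z)) (at z)"
    and P_C1: "continuous_on UNIV P'"
    and D_closed: "closed D"
    and Omega_def: "\<Omega> = {z. P z \<in> D}"
    and zbar_in: "zbar \<in> \<Omega>"
    and B_stat: "0 \<in> (\<lambda>n. gf zbar + n) ` rnormal \<Omega> zbar"
    and GGCQ: "rnormal \<Omega> zbar = polar (hlincone P (blinfun_apply (P' zbar)) D zbar [])"
    and subreg: "metrically_subregular
                   (\<lambda>u. {P' zbar u - t | t. t \<in> tcone D (P zbar)}) 0 0"
  shows "\<exists>us :: 'a list. \<exists>w ws.
           w \<in> htcone D (P zbar) (map (blinfun_apply (P' zbar)) us) \<and>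
           ws \<in> rnormal (htcone D (P zbar) (map (blinfun_apply (P' zbar)) us)) w \<and>
           gf zbar + adjoint (blinfun_apply (P' zbar)) ws = 0 \<and>
           (\<forall>l < length us.
              us ! l \<in> hlincone P (blinfun_apply (P' zbar)) D zbar (take l us) \<and>
              P' zbar (us ! l) \<notin>
                Lsp (htcone D (P zbar) (map (blinfun_apply (P' zbar)) (take l us))) \<and>
              gf zbar \<bullet> (us ! l) = 0 \<and>
              \<not> locally_polyhedral
                  (htcone D (P zbar) (map (blinfun_apply (P' zbar)) (take l us)))
                  (P' zbar (us ! l)))"
proof -
  define A where "A = blinfun_apply (P' zbar)"
  define g where "g = gf zbar"
  define K where "K = tcone D (P zbar)"
  have A: "linear A" unfolding A_def by (rule bounded_linear.linear[OF blinfun.bounded_linear_right])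
  have Pz: "P zbar \<in> D" using zbar_in Omega_def by simp
  have Kc: "closed K" unfolding K_def by (rule tcone_closed)
  have Kcone: "cone K" unfolding K_def by (rule tcone_cone)
  have K0: "0 \<in> K" unfolding K_def by (rule zero_in_tcone[OF Pz])
  have Kne: "K \<noteq> {}" using K0 by blast
  have hl: "hlincone P A D zbar xs = {u. A u \<in> ftc K (map A xs)}" for xs
    unfolding hlincone_def htcone_def K_def by simp
  have ht: "htcone D (P zbar) xs = ftc K xs" for xs unfolding htcone_def K_def by simp
  have pol: "g \<bullet> u \<ge> 0" if u: "A u \<in> K" for u
  proof -
    obtain n where n: "n \<in> rnormal \<Omega> zbar" "0 = g + n" using B_stat unfolding g_def by blast
    have "n \<in> polar {u. A u \<in> K}" using n(1) GGCQ hl[of "[]"] unfolding A_def by simp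
    hence "n \<bullet> u \<le> 0" using u unfolding polar_def by blast
    moreover have "n = - g" using n(2) by (simp add: eq_neg_iff_add_eq_0 add.commute)
    ultimately show ?thesis by simp
  qed
  have sr: "metrically_subregular (\<lambda>u. {A u - t | t. t \<in> K}) 0 0" using subreg unfolding A_def K_def .
  obtain c where c: "c \<ge> 0" "good A g c K" using initial_good[OF A Kc Kcone K0 pol sr] by blast
  obtain us w ws where R: "w \<in> ftc K (map A us)" "ws \<in> rnormal (ftc K (map A us)) w" "g + adjoint A ws = 0"
      "\<forall>l < length us. A (us ! l) \<in> ftc K (map A (take l us)) \<and>
         A (us ! l) \<notin> Lsp (ftc K (map A (take l us))) \<and> g \<bullet> (us ! l) = 0 \<and>
         \<not> locally_polyhedral (ftc K (map A (take l us))) (A (us ! l))"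
    using main[OF A c(1) Kc Kcone Kne c(2)] by blast
  show ?thesis
    apply (rule exI[of _ us], rule exI[of _ w], rule exI[of _ ws])
    using R unfolding A_def[symmetric] g_def[symmetric] ht hl by simp
qed

end
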